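(* There exist absolute constants $a,b>0$ such that the following holds. Let $0<\epsilon\le\Delta\le1$ and let $G$ be an $n\times n$ bimatrix game with payoffs in $[0,1]$ that has at most $n^{a(\Delta/\epsilon)^2}$ Nash equilibria and satisfies the well-supported $(\epsilon,\Delta)$-approximation stability condition (or the $(\epsilon/2,\Delta)$-stability to perturbations condition). Then: (1) every Nash equilibrium of $G$ is $8\Delta$-close to a pair of mixed strategies each with support of size at most $b(\Delta/\epsilon)^2\log(1+\Delta^{-1})\log n$; (2) for every game $G'$ within $L_\infty$ distance $\epsilon/2$ of $G$, every Nash equilibrium of $G'$ is $9\Delta$-close to a pair of mixed strategies each with support of size at most $b(\Delta/\epsilon)^2\log(1+\Delta^{-1})\log n$.
   Context: Bimatrix game: row payoff $R_{i,j}$, column payoff $C_{i,j}$; mixed strategies $p,q$ are probability vectors, payoffs $p^TRq$, $p^TCq$; $e_i$ is the $i$-th unit vector; $\mathrm{supp}(p)=\{i:p_i>0\}$. Nash equilibrium: $e_i^TRq\le p^TRq$ and $p^TCe_j\le p^TCq$ for all $i,j$. Well-supported $\epsilon$-equilibrium: for every $i\in\mathrm{supp}(p)$ and all $j$, $e_i^TRq\ge e_j^TRq-\epsilon$, and for every $i\in\mathrm{supp}(q)$ and all $j$, $p^TCe_i\ge p^TCe_j-\epsilon$. Distance $d(p,p')=\frac12\sum_i|p_i-p'_i|$, $d((p,q),(p',q'))=\max(d(p,p'),d(q,q'))$; $\Delta$-close means distance $\le\Delta$. $G'$ (matrices $R',C'$) is within $L_\infty$ distance $\alpha$ of $G$ (an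 $L_\infty$ $\alpha$-perturbation) if $|R_{i,j}-R'_{i,j}|\le\alpha$ and $|C_{i,j}-C'_{i,j}|\le\alpha$ for all $i,j$ (entries need not be in $[0,1]$). $(\epsilon,\Delta)$-stability to perturbations: for every $L_\infty$ $\epsilon$-perturbation $G'$ of $G$, every Nash equilibrium of $G'$ is $\Delta$-close to some Nash equilibrium of $G$. Well-supported $(\epsilon,\Delta)$-approximation stability: every well-supported $\epsilon$-equilibrium of $G$ is $\Delta$-close to some Nash equilibrium of $G$. $\log$ is natural. *)

theory Defs
  imports "HOL-Analysis.Analysis"
begin

text \<open>n x n bimatrix games: strategies indexed by {..<n}; payoff matrices
  nat => nat => real (only entries with indices < n matter).\<close>

definition mixed :: "nat \<Rightarrow> (nat \<Rightarrow> real) \<Rightarrow> bool" where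
  "mixed n p \<longleftrightarrow> (\<forall>i<n. 0 \<le> p i) \<and> (\<forall>i\<ge>n. p i = 0) \<and> (\<Sum>i<n. p i) = 1"

definition supp :: "nat \<Rightarrow> (nat \<Rightarrow> real) \<Rightarrow> nat set" where
  "supp n p = {i. i < n \<and> p i > 0}"

definition unit_vec :: "nat \<Rightarrow> nat \<Rightarrow> real" where
  "unit_vec i = (\<lambda>k. if k = i then 1 else 0)"

definition payoff :: "nat \<Rightarrow> (nat \<Rightarrow> nat \<Rightarrow> real) \<Rightarrow> (nat \<Rightarrow> real) \<Rightarrow> (nat \<Rightarrow> real) \<Rightarrow> real" where
  "payoff n M p q = (\<Sum>i<n. \<Sum>j<n. p i * M i j * q j)"

definition nash :: "nat \<Rightarrow> (nat \<Rightarrow> nat \<Rightarrow> real) \<Rightarrow> (nat \<Rightarrow> nat \<Rightarrow> real)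
                    \<Rightarrow> (nat \<Rightarrow> real) \<Rightarrow> (nat \<Rightarrow> real) \<Rightarrow> bool" where
  "nash n R C p q \<longleftrightarrow> mixed n p \<and> mixed n q \<and>
     (\<forall>i<n. payoff n R (unit_vec i) q \<le> payoff n R p q) \<and>
     (\<forall>j<n. payoff n C p (unit_vec j) \<le> payoff n C p q)"

definition ws_eq :: "nat \<Rightarrow> (nat \<Rightarrow> nat \<Rightarrow> real) \<Rightarrow> (nat \<Rightarrow> nat \<Rightarrow> real)
                    \<Rightarrow> real \<Rightarrow> (nat \<Rightarrow> real) \<Rightarrow> (nat \<Rightarrow> real) \<Rightarrow> bool" where
  "ws_eq n R C \<epsilon> p q \<longleftrightarrow> mixed n p \<and> mixed n q \<and>
     (\<forall>i\<in>supp n p. \<forall>j<n. payoff n R (unit_vec i) q \<ge> payoff n R (unit_vec j) q - \<epsilon>) \<and>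
     (\<forall>i\<in>supp n q. \<forall>j<n. payoff n C p (unit_vec i) \<ge> payoff n C p (unit_vec j) - \<epsilon>)"

definition sdist :: "nat \<Rightarrow> (nat \<Rightarrow> real) \<Rightarrow> (nat \<Rightarrow> real) \<Rightarrow> real" where
  "sdist n p p' = (\<Sum>i<n. \<bar>p i - p' i\<bar>) / 2"

definition pdist :: "nat \<Rightarrow> (nat \<Rightarrow> real) \<times> (nat \<Rightarrow> real) \<Rightarrow> (nat \<Rightarrow> real) \<times> (nat \<Rightarrow> real) \<Rightarrow> real" where
  "pdist n pq pq' = max (sdist n (fst pq) (fst pq')) (sdist n (snd pq) (snd pq'))"

definition nash_set :: "nat \<Rightarrow> (nat \<Rightarrow> nat \<Rightarrow> real) \<Rightarrow> (nat \<Rightarrow> nat \<Rightarrow> real)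
                        \<Rightarrow> ((nat \<Rightarrow> real) \<times> (nat \<Rightarrow> real)) set" where
  "nash_set n R C = {(p, q). nash n R C p q}"

definition perturb :: "nat \<Rightarrow> real \<Rightarrow> (nat \<Rightarrow> nat \<Rightarrow> real) \<Rightarrow> (nat \<Rightarrow> nat \<Rightarrow> real)
                       \<Rightarrow> (nat \<Rightarrow> nat \<Rightarrow> real) \<Rightarrow> (nat \<Rightarrow> nat \<Rightarrow> real) \<Rightarrow> bool" where
  "perturb n \<alpha> R C R' C' \<longleftrightarrow>
     (\<forall>i<n. \<forall>j<n. \<bar>R i j - R' i j\<bar> \<le> \<alpha> \<and> \<bar>C i j - C' i j\<bar> \<le> \<alpha>)"

definition ws_approx_stable :: "nat \<Rightarrow> (nat \<Rightarrow> nat \<Rightarrow> real) \<Rightarrow> (nat \<Rightarrow> nat \<Rightarrow> real)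
                                \<Rightarrow> real \<Rightarrow> real \<Rightarrow> bool" where
  "ws_approx_stable n R C \<epsilon> \<Delta> \<longleftrightarrow>
     (\<forall>p q. ws_eq n R C \<epsilon> p q \<longrightarrow> (\<exists>pq'\<in>nash_set n R C. pdist n (p, q) pq' \<le> \<Delta>))"

definition perturb_stable :: "nat \<Rightarrow> (nat \<Rightarrow> nat \<Rightarrow> real) \<Rightarrow> (nat \<Rightarrow> nat \<Rightarrow> real)
                              \<Rightarrow> real \<Rightarrow> real \<Rightarrow> bool" where
  "perturb_stable n R C \<epsilon> \<Delta> \<longleftrightarrow>
     (\<forall>R' C'. perturb n \<epsilon> R C R' C' \<longrightarrow>
        (\<forall>p q. nash n R' C' p q \<longrightarrow> (\<exists>pq'\<in>nash_set n R C. pdist n (p, q) pq' \<le> \<Delta>)))"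

end

theory Submission
  imports Defs "HOL-Probability.Hoeffding"
begin


lemma cosh_bound:
  fixes x :: real
  shows "exp x + exp (-x) \<le> 2 * exp (x\<^sup>2 / 2)"
proof -
  have main: "exp y + exp (-y) \<le> 2 * exp (y\<^sup>2 / 2)" if "y \<ge> 0" for y :: real
  proof -
    have "- (2*y) * (1/2) + ln (1 + (1/2) * (exp (2*y) - 1)) \<le> (2*y)\<^sup>2 / 8"
      using Hoeffdings_lemma_aux[of "2*y" "1/2"] that by simp
    hence "ln ((exp (2*y) + 1) / 2) \<le> y + y\<^sup>2/2"
      by (simp add: power2_eq_square field_simps)
    hence "(exp (2*y) + 1) / 2 \<le> exp (y + y\<^sup>2/2)"
      by (metis add_pos_nonneg exp_gt_zero exp_le_cancel_iff exp_ln half_gt_zero zero_less_one_class.zero_le_one)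
    hence "(exp (2*y) + 1) / 2 * exp (-y) \<le> exp (y + y\<^sup>2/2) * exp (-y)"
      by (intro mult_right_mono) auto
    moreover have "(exp (2*y) + 1) / 2 * exp (-y) = (exp y + exp (-y))/2"
      by (simp add: field_simps flip: exp_add)
    moreover have "exp (y + y\<^sup>2/2) * exp (-y) = exp (y\<^sup>2/2)"
      by (simp flip: exp_add)
    ultimately show ?thesis by simp
  qed
  show ?thesis
  proof (cases "x \<ge> 0")
    case True thus ?thesis by (rule main)
  next
    case False
    hence "exp (-x) + exp (- (-x)) \<le> 2 * exp ((-x)\<^sup>2 / 2)" by (intro main) simp
    thus ?thesis by simp
  qed
qed

definition signs :: "nat set \<Rightarrow> (nat \<Rightarrow> real) set" where
  "signs L = PiE L (\<lambda>_. {-1, 1})"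

lemma card_signs: "finite L \<Longrightarrow> card (signs L) = 2 ^ card L"
  unfolding signs_def by (simp add: card_PiE numeral_2_eq_2)

lemma finite_signs: "finite L \<Longrightarrow> finite (signs L)"
  unfolding signs_def by (simp add: finite_PiE)

lemma mgf_signs:
  fixes a :: "nat \<Rightarrow> real"
  assumes "finite L"
  shows "(\<Sum>\<sigma>\<in>signs L. exp (\<theta> * (\<Sum>i\<in>L. \<sigma> i * a i)))
          \<le> 2 ^ card L * exp (\<theta>\<^sup>2 * (\<Sum>i\<in>L. (a i)\<^sup>2) / 2)"
proof -
  have "(\<Sum>\<sigma>\<in>signs L. exp (\<theta> * (\<Sum>i\<in>L. \<sigma> i * a i)))
      = (\<Sum>\<sigma>\<in>signs L. \<Prod>i\<in>L. exp (\<theta> * (\<sigma> i * a i)))"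
    using assms by (simp add: sum_distrib_left exp_sum)
  also have "\<dots> = (\<Prod>i\<in>L. \<Sum>s\<in>{-1,1::real}. exp (\<theta> * (s * a i)))"
    unfolding signs_def using assms by (subst prod_sum_PiE) auto
  also have "\<dots> = (\<Prod>i\<in>L. exp (\<theta> * a i) + exp (- (\<theta> * a i)))"
    by (simp add: add.commute)
  also have "\<dots> \<le> (\<Prod>i\<in>L. 2 * exp ((\<theta> * a i)\<^sup>2 / 2))"
    by (intro prod_mono conjI cosh_bound) (auto intro: add_nonneg_nonneg)
  also have "\<dots> = 2 ^ card L * exp (\<theta>\<^sup>2 * (\<Sum>i\<in>L. (a i)\<^sup>2) / 2)"
    using assms by (simp add: prod.distrib exp_sum power_mult_distrib sum_distrib_left sum_divide_distrib)
  finally show ?thesis .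
qed

lemma hoeffding_signs:
  fixes a :: "nat \<Rightarrow> real"
  assumes "finite L" "t \<ge> 0"
  shows "real (card {\<sigma>\<in>signs L. (\<Sum>i\<in>L. \<sigma> i * a i) \<ge> t})
          \<le> exp (- t\<^sup>2 / (2 * (\<Sum>i\<in>L. (a i)\<^sup>2))) * 2 ^ card L"
proof (cases "(\<Sum>i\<in>L. (a i)\<^sup>2) = 0")
  case True
  have "card {\<sigma>\<in>signs L. (\<Sum>i\<in>L. \<sigma> i * a i) \<ge> t} \<le> card (signs L)"
    by (intro card_mono finite_signs assms) auto
  thus ?thesis using True assms by (simp add: card_signs)
next
  case False
  define S where "S = (\<Sum>i\<in>L. (a i)\<^sup>2)"
  have S: "S > 0" using False unfolding S_def by (simp add: sum_nonneg order_le_neq_trans)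
  define \<theta> where "\<theta> = t / S"
  have th: "\<theta> \<ge> 0" using S assms unfolding \<theta>_def by simp
  define A where "A = {\<sigma>\<in>signs L. (\<Sum>i\<in>L. \<sigma> i * a i) \<ge> t}"
  have fin: "finite (signs L)" using assms by (simp add: finite_signs)
  have "real (card A) = (\<Sum>\<sigma>\<in>A. 1)" by simp
  also have "\<dots> \<le> (\<Sum>\<sigma>\<in>A. exp (\<theta> * (\<Sum>i\<in>L. \<sigma> i * a i) - \<theta> * t))"
    by (intro sum_mono) (auto simp: A_def th mult_left_mono simp flip: right_diff_distrib)
  also have "\<dots> \<le> (\<Sum>\<sigma>\<in>signs L. exp (\<theta> * (\<Sum>i\<in>L. \<sigma> i * a i) - \<theta> * t))"
    by (intro sum_mono2 fin) (auto simp: A_def)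
  also have "\<dots> = exp (- \<theta> * t) * (\<Sum>\<sigma>\<in>signs L. exp (\<theta> * (\<Sum>i\<in>L. \<sigma> i * a i)))"
    unfolding sum_distrib_left by (intro sum.cong refl) (simp add: mult_exp_exp)
  also have "\<dots> \<le> exp (- \<theta> * t) * (2 ^ card L * exp (\<theta>\<^sup>2 * S / 2))"
    unfolding S_def by (intro mult_left_mono mgf_signs assms) auto
  also have "\<dots> = exp (- \<theta> * t + \<theta>\<^sup>2 * S / 2) * 2 ^ card L"
    by (simp add: mult_exp_exp)
  also have "- \<theta> * t + \<theta>\<^sup>2 * S / 2 = - t\<^sup>2 / (2 * S)"
    unfolding \<theta>_def using S by (simp add: field_simps power2_eq_square)
  finally show ?thesis unfolding A_def S_def .
qed

lemma hoeffding_signs_abs: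
  fixes a :: "nat \<Rightarrow> real"
  assumes "finite L" "t \<ge> 0"
  shows "real (card {\<sigma>\<in>signs L. \<bar>\<Sum>i\<in>L. \<sigma> i * a i\<bar> \<ge> t})
          \<le> 2 * exp (- t\<^sup>2 / (2 * (\<Sum>i\<in>L. (a i)\<^sup>2))) * 2 ^ card L"
proof -
  let ?P = "{\<sigma>\<in>signs L. (\<Sum>i\<in>L. \<sigma> i * a i) \<ge> t}"
  let ?N = "{\<sigma>\<in>signs L. (\<Sum>i\<in>L. \<sigma> i * (- a i)) \<ge> t}"
  have "{\<sigma>\<in>signs L. \<bar>\<Sum>i\<in>L. \<sigma> i * a i\<bar> \<ge> t} \<subseteq> ?P \<union> ?N"
    by (auto simp: sum_negf abs_if split: if_splits)
  moreover have "finite ?P" "finite ?N"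
    by (auto intro: finite_subset[OF _ finite_signs[OF assms(1)]])
  ultimately have "card {\<sigma>\<in>signs L. \<bar>\<Sum>i\<in>L. \<sigma> i * a i\<bar> \<ge> t} \<le> card (?P \<union> ?N)"
    by (intro card_mono) auto
  also have "\<dots> \<le> card ?P + card ?N" by (rule card_Un_le)
  finally have "real (card {\<sigma>\<in>signs L. \<bar>\<Sum>i\<in>L. \<sigma> i * a i\<bar> \<ge> t}) \<le> real (card ?P) + real (card ?N)"
    by linarith
  also have "\<dots> \<le> exp (- t\<^sup>2 / (2 * (\<Sum>i\<in>L. (a i)\<^sup>2))) * 2 ^ card L + exp (- t\<^sup>2 / (2 * (\<Sum>i\<in>L. (- a i)\<^sup>2))) * 2 ^ card L"
    by (intro add_mono hoeffding_signs assms)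
  finally show ?thesis by (simp add: mult.commute mult.left_commute)
qed



lemma payoff_row: "i < n \<Longrightarrow> payoff n R (unit_vec i) q = (\<Sum>j<n. R i j * q j)"
proof -
  assume i: "i < n"
  have "payoff n R (unit_vec i) q = (\<Sum>ia<n. (if ia = i then (\<Sum>j<n. R ia j * q j) else 0))"
    unfolding payoff_def unit_vec_def by (intro sum.cong refl) auto
  also have "\<dots> = (\<Sum>j<n. R i j * q j)" using i by (simp add: sum.delta)
  finally show ?thesis .
qed

lemma payoff_col: "j < n \<Longrightarrow> payoff n C p (unit_vec j) = (\<Sum>i<n. p i * C i j)"
proof -
  assume j: "j < n"
  have "payoff n C p (unit_vec j) = (\<Sum>i<n. \<Sum>ja<n. (if ja = j then p i * C i ja else 0))"
    unfolding payoff_def unit_vec_def by (intro sum.cong refl) auto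
  also have "\<dots> = (\<Sum>i<n. p i * C i j)" using j by (simp add: sum.delta)
  finally show ?thesis .
qed

lemma payoff_expand_row: "payoff n R p q = (\<Sum>i<n. p i * payoff n R (unit_vec i) q)"
proof -
  have "(\<Sum>i<n. p i * payoff n R (unit_vec i) q) = (\<Sum>i<n. p i * (\<Sum>j<n. R i j * q j))"
    by (intro sum.cong refl) (simp add: payoff_row)
  also have "\<dots> = payoff n R p q" by (simp add: payoff_def sum_distrib_left mult.assoc)
  finally show ?thesis by simp
qed

lemma payoff_expand_col: "payoff n C p q = (\<Sum>j<n. q j * payoff n C p (unit_vec j))"
proof -
  have "(\<Sum>j<n. q j * payoff n C p (unit_vec j)) = (\<Sum>j<n. q j * (\<Sum>i<n. p i * C i j))"
    by (intro sum.cong refl) (simp add: payoff_col)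
  also have "\<dots> = (\<Sum>j<n. (\<Sum>i<n. p i * C i j) * q j)" by (simp add: mult.commute)
  also have "\<dots> = (\<Sum>j<n. \<Sum>i<n. p i * C i j * q j)" by (simp add: sum_distrib_right)
  also have "\<dots> = payoff n C p q" unfolding payoff_def by (rule sum.swap)
  finally show ?thesis by simp
qed

lemma weighted_avg_eq:
  fixes w x :: "nat \<Rightarrow> real"
  assumes "finite A" "\<forall>k\<in>A. 0 \<le> w k" "\<forall>k\<in>A. x k \<le> v" "(\<Sum>k\<in>A. w k) = 1"
    "(\<Sum>k\<in>A. w k * x k) = v" "i \<in> A" "w i > 0"
  shows "x i = v"
proof -
  have "(\<Sum>k\<in>A. w k * (v - x k)) = v * (\<Sum>k\<in>A. w k) - (\<Sum>k\<in>A. w k * x k)"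
    by (simp add: right_diff_distrib sum_subtractf sum_distrib_left mult.commute)
  also have "\<dots> = 0" using assms(4,5) by simp
  finally have s0: "(\<Sum>k\<in>A. w k * (v - x k)) = 0" .
  have nn: "\<forall>k\<in>A. 0 \<le> w k * (v - x k)" using assms(2,3) by simp
  have "\<forall>k\<in>A. w k * (v - x k) = 0" using sum_nonneg_eq_0_iff[OF assms(1), of "\<lambda>k. w k * (v - x k)"] nn s0 by blast
  hence "w i * (v - x i) = 0" using assms(6) by simp
  thus ?thesis using assms(7) by simp
qed

lemma nash_supp_row:
  assumes "nash n R C p q" "i \<in> supp n p"
  shows "payoff n R (unit_vec i) q = payoff n R p q"
proof -
  have m: "mixed n p" and le: "\<forall>k<n. payoff n R (unit_vec k) q \<le> payoff n R p q"
    using assms(1) unfolding nash_def by blast+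
  have i: "i \<in> {..<n}" "p i > 0" using assms(2) unfolding supp_def by auto
  show ?thesis
    by (rule weighted_avg_eq[of "{..<n}" p _ _ i])
       (use m le i in \<open>simp_all add: mixed_def payoff_expand_row[symmetric]\<close>)
qed

lemma nash_supp_col:
  assumes "nash n R C p q" "j \<in> supp n q"
  shows "payoff n C p (unit_vec j) = payoff n C p q"
proof -
  have m: "mixed n q" and le: "\<forall>k<n. payoff n C p (unit_vec k) \<le> payoff n C p q"
    using assms(1) unfolding nash_def by blast+
  have j: "j \<in> {..<n}" "q j > 0" using assms(2) unfolding supp_def by auto
  show ?thesis
    by (rule weighted_avg_eq[of "{..<n}" q _ _ j])
       (use m le j in \<open>simp_all add: mixed_def payoff_expand_col[symmetric]\<close>)
qed

lemma ws_row_perturb: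
  assumes "nash n R C p q" "0 < \<epsilon>" "mixed n p'" "supp n p' \<subseteq> supp n p"
    "\<forall>j<n. \<bar>(\<Sum>i<n. p' i * C i j) - (\<Sum>i<n. p i * C i j)\<bar> \<le> \<epsilon>/2"
  shows "ws_eq n R C \<epsilon> p' q"
proof -
  have rows: "payoff n R (unit_vec i) q \<ge> payoff n R (unit_vec j) q - \<epsilon>"
    if "i \<in> supp n p'" "j < n" for i j
  proof -
    have "i \<in> supp n p" using that assms(4) by blast
    hence "payoff n R (unit_vec i) q = payoff n R p q" by (rule nash_supp_row[OF assms(1)])
    moreover have "payoff n R (unit_vec j) q \<le> payoff n R p q" using assms(1) that(2) unfolding nash_def by blast
    ultimately show ?thesis using assms(2) by linarith
  qed
  have cols: "payoff n C p' (unit_vec i) \<ge> payoff n C p' (unit_vec j) - \<epsilon>"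
    if "i \<in> supp n q" "j < n" for i j
  proof -
    have i: "i < n" using that unfolding supp_def by auto
    have "payoff n C p (unit_vec i) = payoff n C p q" by (rule nash_supp_col[OF assms(1) that(1)])
    moreover have "payoff n C p (unit_vec j) \<le> payoff n C p q" using assms(1) that unfolding nash_def by auto
    moreover have "\<bar>payoff n C p' (unit_vec i) - payoff n C p (unit_vec i)\<bar> \<le> \<epsilon>/2"
      using assms(5) i by (simp add: payoff_col)
    moreover have "\<bar>payoff n C p' (unit_vec j) - payoff n C p (unit_vec j)\<bar> \<le> \<epsilon>/2"
      using assms(5) that by (simp add: payoff_col)
    ultimately show ?thesis by linarith
  qed
  have "mixed n p" "mixed n q" using assms(1) unfolding nash_def by blast+
  thus ?thesis using assms(3) rows cols unfolding ws_eq_def by blast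
qed

lemma ws_col_perturb:
  assumes "nash n R C p q" "0 < \<epsilon>" "mixed n q'" "supp n q' \<subseteq> supp n q"
    "\<forall>i<n. \<bar>(\<Sum>j<n. q' j * R i j) - (\<Sum>j<n. q j * R i j)\<bar> \<le> \<epsilon>/2"
  shows "ws_eq n R C \<epsilon> p q'"
proof -
  have cols: "payoff n C p (unit_vec i) \<ge> payoff n C p (unit_vec j) - \<epsilon>"
    if "i \<in> supp n q'" "j < n" for i j
  proof -
    have "i \<in> supp n q" using that assms(4) by blast
    hence "payoff n C p (unit_vec i) = payoff n C p q" by (rule nash_supp_col[OF assms(1)])
    moreover have "payoff n C p (unit_vec j) \<le> payoff n C p q" using assms(1) that(2) unfolding nash_def by blast
    ultimately show ?thesis using assms(2) by linarith
  qed
  have rows: "payoff n R (unit_vec i) q' \<ge> payoff n R (unit_vec j) q' - \<epsilon>"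
    if "i \<in> supp n p" "j < n" for i j
  proof -
    have i: "i < n" using that unfolding supp_def by auto
    have "payoff n R (unit_vec i) q = payoff n R p q" by (rule nash_supp_row[OF assms(1) that(1)])
    moreover have "payoff n R (unit_vec j) q \<le> payoff n R p q" using assms(1) that unfolding nash_def by auto
    moreover have "\<bar>payoff n R (unit_vec i) q' - payoff n R (unit_vec i) q\<bar> \<le> \<epsilon>/2"
      using assms(5) i by (simp add: payoff_row mult.commute)
    moreover have "\<bar>payoff n R (unit_vec j) q' - payoff n R (unit_vec j) q\<bar> \<le> \<epsilon>/2"
      using assms(5) that by (simp add: payoff_row mult.commute)
    ultimately show ?thesis by linarith
  qed
  have "mixed n p" "mixed n q" using assms(1) unfolding nash_def by blast+
  thus ?thesis using assms(3) rows cols unfolding ws_eq_def by blast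
qed

lemma mixed_unit: "i < n \<Longrightarrow> mixed n (unit_vec i)"
  unfolding mixed_def unit_vec_def by auto

lemma perturb_payoff:
  assumes "perturb n \<alpha> R C R' C'" "mixed n p" "mixed n q"
  shows "\<bar>payoff n R p q - payoff n R' p q\<bar> \<le> \<alpha>" "\<bar>payoff n C p q - payoff n C' p q\<bar> \<le> \<alpha>"
proof -
  have pq: "(\<Sum>i<n. \<Sum>j<n. p i * \<alpha> * q j) = \<alpha>"
    using assms(2,3) unfolding mixed_def
    by (simp add: sum_distrib_left[symmetric] sum_distrib_right[symmetric] mult.assoc)
  have "\<bar>payoff n R p q - payoff n R' p q\<bar> = \<bar>\<Sum>i<n. \<Sum>j<n. p i * (R i j - R' i j) * q j\<bar>"
    unfolding payoff_def by (simp add: sum_subtractf algebra_simps)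
  also have "\<dots> \<le> (\<Sum>i<n. \<Sum>j<n. \<bar>p i * (R i j - R' i j) * q j\<bar>)"
    by (rule order_trans[OF sum_abs]) (intro sum_mono sum_abs)
  also have "\<dots> \<le> (\<Sum>i<n. \<Sum>j<n. p i * \<alpha> * q j)"
    using assms unfolding mixed_def perturb_def
  proof (intro sum_mono)
    fix i j assume i: "i \<in> {..<n}" and j: "j \<in> {..<n}"
    have "\<bar>R i j - R' i j\<bar> \<le> \<alpha>" "\<bar>C i j - C' i j\<bar> \<le> \<alpha>" using assms(1) i j unfolding perturb_def by auto
    moreover have "0 \<le> p i" "0 \<le> q j" using assms(2,3) i j unfolding mixed_def by auto
    ultimately show "\<bar>p i * (R i j - R' i j) * q j\<bar> \<le> p i * \<alpha> * q j"
      by (auto simp: abs_mult intro!: mult_right_mono mult_left_mono)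
  qed
  finally show "\<bar>payoff n R p q - payoff n R' p q\<bar> \<le> \<alpha>" using pq by simp
  have "\<bar>payoff n C p q - payoff n C' p q\<bar> = \<bar>\<Sum>i<n. \<Sum>j<n. p i * (C i j - C' i j) * q j\<bar>"
    unfolding payoff_def by (simp add: sum_subtractf algebra_simps)
  also have "\<dots> \<le> (\<Sum>i<n. \<Sum>j<n. \<bar>p i * (C i j - C' i j) * q j\<bar>)"
    by (rule order_trans[OF sum_abs]) (intro sum_mono sum_abs)
  also have "\<dots> \<le> (\<Sum>i<n. \<Sum>j<n. p i * \<alpha> * q j)"
    using assms unfolding mixed_def perturb_def
  proof (intro sum_mono)
    fix i j assume i: "i \<in> {..<n}" and j: "j \<in> {..<n}"
    have "\<bar>R i j - R' i j\<bar> \<le> \<alpha>" "\<bar>C i j - C' i j\<bar> \<le> \<alpha>" using assms(1) i j unfolding perturb_def by auto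
    moreover have "0 \<le> p i" "0 \<le> q j" using assms(2,3) i j unfolding mixed_def by auto
    ultimately show "\<bar>p i * (C i j - C' i j) * q j\<bar> \<le> p i * \<alpha> * q j"
      by (auto simp: abs_mult intro!: mult_right_mono mult_left_mono)
  qed
  finally show "\<bar>payoff n C p q - payoff n C' p q\<bar> \<le> \<alpha>" using pq by simp
qed

lemma nash_perturb_ws:
  assumes "perturb n (\<epsilon>/2) R C R' C'" "nash n R' C' p q"
  shows "ws_eq n R C \<epsilon> p q"
proof -
  have mp: "mixed n p" "mixed n q" using assms(2) unfolding nash_def by auto
  have rows: "payoff n R (unit_vec i) q \<ge> payoff n R (unit_vec j) q - \<epsilon>"
    if "i \<in> supp n p" "j < n" for i j
  proof -
    have i: "i < n" using that unfolding supp_def by auto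
    have "payoff n R' (unit_vec i) q = payoff n R' p q" by (rule nash_supp_row[OF assms(2) that(1)])
    moreover have "payoff n R' (unit_vec j) q \<le> payoff n R' p q" using assms(2) that unfolding nash_def by auto
    moreover note perturb_payoff(1)[OF assms(1) mixed_unit[OF i] mp(2)]
    moreover note perturb_payoff(1)[OF assms(1) mixed_unit[OF that(2)] mp(2)]
    ultimately show ?thesis by linarith
  qed
  have cols: "payoff n C p (unit_vec i) \<ge> payoff n C p (unit_vec j) - \<epsilon>"
    if "i \<in> supp n q" "j < n" for i j
  proof -
    have i: "i < n" using that unfolding supp_def by auto
    have "payoff n C' p (unit_vec i) = payoff n C' p q" by (rule nash_supp_col[OF assms(2) that(1)])
    moreover have "payoff n C' p (unit_vec j) \<le> payoff n C' p q" using assms(2) that unfolding nash_def by auto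
    moreover note perturb_payoff(2)[OF assms(1) mp(1) mixed_unit[OF i]]
    moreover note perturb_payoff(2)[OF assms(1) mp(1) mixed_unit[OF that(2)]]
    ultimately show ?thesis by linarith
  qed
  show ?thesis using mp rows cols unfolding ws_eq_def by blast
qed



lemma mixed_n_pos: "mixed n p \<Longrightarrow> 0 < n"
  unfolding mixed_def by (cases n) auto

lemma sum_supp_const:
  assumes "mixed n p" "\<forall>i\<in>supp n p. x i = v"
  shows "(\<Sum>i<n. p i * x i) = v"
proof -
  have "(\<Sum>i<n. p i * x i) = (\<Sum>i<n. p i * v)"
  proof (intro sum.cong refl)
    fix i assume i: "i \<in> {..<n}"
    show "p i * x i = p i * v"
    proof (cases "p i > 0")
      case True thus ?thesis using assms(2) i unfolding supp_def by auto
    next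
      case False hence "p i = 0" using assms(1) i unfolding mixed_def by force
      thus ?thesis by simp
    qed
  qed
  also have "\<dots> = v" using assms unfolding mixed_def by (simp add: sum_distrib_right[symmetric])
  finally show ?thesis .
qed

lemma payoff_row_shift:
  assumes "mixed n q" "i < n"
  shows "payoff n (\<lambda>i j. R i j + c i) (unit_vec i) q = payoff n R (unit_vec i) q + c i"
  using assms unfolding mixed_def by (simp add: payoff_row distrib_right sum.distrib sum_distrib_left[symmetric])

lemma payoff_col_shift:
  assumes "mixed n p" "j < n"
  shows "payoff n (\<lambda>i j. C i j + c j) p (unit_vec j) = payoff n C p (unit_vec j) + c j"
  using assms unfolding mixed_def by (simp add: payoff_col distrib_left sum.distrib sum_distrib_right[symmetric])

lemma perturb_stable_ws:
  assumes ps: "perturb_stable n R C (\<epsilon>/2) \<Delta>" and e: "0 < \<epsilon>"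
  shows "ws_approx_stable n R C \<epsilon> \<Delta>"
  unfolding ws_approx_stable_def
proof (intro allI impI)
  fix p q assume ws: "ws_eq n R C \<epsilon> p q"
  have mp: "mixed n p" "mixed n q" using ws unfolding ws_eq_def by auto
  have n: "0 < n" using mixed_n_pos[OF mp(1)] .
  define vR where "vR = Max ((\<lambda>i. payoff n R (unit_vec i) q) ` {..<n})"
  define vC where "vC = Max ((\<lambda>j. payoff n C p (unit_vec j)) ` {..<n})"
  have vR_ge: "payoff n R (unit_vec i) q \<le> vR" if "i < n" for i
    unfolding vR_def using that by (intro Max_ge) auto
  have vC_ge: "payoff n C p (unit_vec j) \<le> vC" if "j < n" for j
    unfolding vC_def using that by (intro Max_ge) auto
  have "vR \<in> (\<lambda>i. payoff n R (unit_vec i) q) ` {..<n}"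
    unfolding vR_def using n by (intro Max_in) auto
  then obtain i0 where i0: "i0 < n" "vR = payoff n R (unit_vec i0) q" by auto
  have "vC \<in> (\<lambda>j. payoff n C p (unit_vec j)) ` {..<n}"
    unfolding vC_def using n by (intro Max_in) auto
  then obtain j0 where j0: "j0 < n" "vC = payoff n C p (unit_vec j0)" by auto
  define cR where "cR i = (if i \<in> supp n p then vR - \<epsilon>/2 - payoff n R (unit_vec i) q else - \<epsilon>/2)" for i
  define cC where "cC j = (if j \<in> supp n q then vC - \<epsilon>/2 - payoff n C p (unit_vec j) else - \<epsilon>/2)" for j
  define R' where "R' = (\<lambda>i j. R i j + cR i)"
  define C' where "C' = (\<lambda>i j. C i j + cC j)"
  have cR: "\<bar>cR i\<bar> \<le> \<epsilon>/2" if "i < n" for i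
  proof (cases "i \<in> supp n p")
    case True
    have "payoff n R (unit_vec i) q \<ge> payoff n R (unit_vec i0) q - \<epsilon>"
      using ws True i0 unfolding ws_eq_def by auto
    moreover have eq: "cR i = vR - \<epsilon>/2 - payoff n R (unit_vec i) q" using True by (simp add: cR_def)
    ultimately show ?thesis unfolding eq using vR_ge[OF that] i0 by (intro abs_leI) linarith+
  qed (use e in \<open>auto simp: cR_def\<close>)
  have cC: "\<bar>cC j\<bar> \<le> \<epsilon>/2" if "j < n" for j
  proof (cases "j \<in> supp n q")
    case True
    have "payoff n C p (unit_vec j) \<ge> payoff n C p (unit_vec j0) - \<epsilon>"
      using ws True j0 unfolding ws_eq_def by auto
    moreover have eq: "cC j = vC - \<epsilon>/2 - payoff n C p (unit_vec j)" using True by (simp add: cC_def)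
    ultimately show ?thesis unfolding eq using vC_ge[OF that] j0 by (intro abs_leI) linarith+
  qed (use e in \<open>auto simp: cC_def\<close>)
  have pert: "perturb n (\<epsilon>/2) R C R' C'"
    unfolding perturb_def R'_def C'_def using cR cC by auto
  have rowv: "payoff n R' (unit_vec i) q = (if i \<in> supp n p then vR - \<epsilon>/2 else payoff n R (unit_vec i) q - \<epsilon>/2)"
    if "i < n" for i
    unfolding R'_def using payoff_row_shift[OF mp(2) that, of R cR] by (simp add: cR_def)
  have colv: "payoff n C' p (unit_vec j) = (if j \<in> supp n q then vC - \<epsilon>/2 else payoff n C p (unit_vec j) - \<epsilon>/2)"
    if "j < n" for j
    unfolding C'_def using payoff_col_shift[OF mp(1) that, of C cC] by (simp add: cC_def)
  have pR: "payoff n R' p q = vR - \<epsilon>/2"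
    unfolding payoff_expand_row[of n R' p q]
    by (rule sum_supp_const[OF mp(1)]) (auto simp: rowv supp_def)
  have pC: "payoff n C' p q = vC - \<epsilon>/2"
    unfolding payoff_expand_col[of n C' p q]
    using sum_supp_const[OF mp(2), of "\<lambda>j. payoff n C' p (unit_vec j)" "vC - \<epsilon>/2"]
    by (auto simp: colv supp_def mult.commute)
  have "nash n R' C' p q"
    unfolding nash_def
  proof (intro conjI allI impI)
    fix i assume i: "i < n"
    show "payoff n R' (unit_vec i) q \<le> payoff n R' p q"
      using rowv[OF i] vR_ge[OF i] pR by (simp split: if_splits)
  next
    fix j assume j: "j < n"
    show "payoff n C' p (unit_vec j) \<le> payoff n C' p q"
      using colv[OF j] vC_ge[OF j] pC by (simp split: if_splits)
  qed (use mp in \<open>blast+\<close>)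
  from ps[unfolded perturb_stable_def, rule_format, OF pert this]
  show "\<exists>pq'\<in>nash_set n R C. pdist n (p, q) pq' \<le> \<Delta>" .
qed

lemma sdist_sym: "sdist n p p' = sdist n p' p"
  unfolding sdist_def by (simp add: abs_minus_commute)

lemma sdist_triangle: "sdist n p r \<le> sdist n p p' + sdist n p' r"
proof -
  have "(\<Sum>i<n. \<bar>p i - r i\<bar>) \<le> (\<Sum>i<n. \<bar>p i - p' i\<bar> + \<bar>p' i - r i\<bar>)"
    by (intro sum_mono) linarith
  thus ?thesis unfolding sdist_def by (simp add: sum.distrib)
qed

lemma pdist_triangle: "pdist n x z \<le> pdist n x y + pdist n y z"
  unfolding pdist_def using sdist_triangle[of n "fst x" "fst z" "fst y"] sdist_triangle[of n "snd x" "snd z" "snd y"]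
  by auto



definition ssum :: "nat set \<Rightarrow> (nat \<Rightarrow> real) \<Rightarrow> (nat \<Rightarrow> real) \<Rightarrow> real" where
  "ssum L p \<sigma> = (\<Sum>i\<in>L. \<sigma> i * p i)"

definition numr :: "nat set \<Rightarrow> real \<Rightarrow> (nat \<Rightarrow> real) \<Rightarrow> (nat \<Rightarrow> real) \<Rightarrow> nat \<Rightarrow> real" where
  "numr L l p \<sigma> = (\<lambda>i. p i + l * (if i \<in> L then \<sigma> i * p i else 0))"

definition pert :: "nat set \<Rightarrow> real \<Rightarrow> (nat \<Rightarrow> real) \<Rightarrow> (nat \<Rightarrow> real) \<Rightarrow> nat \<Rightarrow> real" where
  "pert L l p \<sigma> = (\<lambda>i. numr L l p \<sigma> i / (1 + l * ssum L p \<sigma>))"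

lemma signs_val: "\<sigma> \<in> signs L \<Longrightarrow> i \<in> L \<Longrightarrow> \<sigma> i = -1 \<or> \<sigma> i = 1"
  unfolding signs_def by (auto simp: PiE_iff)

lemma signs_sq: "\<sigma> \<in> signs L \<Longrightarrow> i \<in> L \<Longrightarrow> \<sigma> i * \<sigma> i = 1"
  using signs_val by fastforce

lemma sum_if_sub:
  fixes f :: "nat \<Rightarrow> real"
  assumes "L \<subseteq> {..<n}"
  shows "(\<Sum>i<n. if i \<in> L then f i else 0) = sum f L"
proof -
  have "(\<Sum>i<n. if i \<in> L then f i else 0) = sum f ({..<n} \<inter> {x. x \<in> L}) + sum (\<lambda>_. 0) ({..<n} \<inter> - {x. x \<in> L})"
    by (rule sum.If_cases) simp
  also have "{..<n} \<inter> {x. x \<in> L} = L" using assms by blast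
  finally show ?thesis by simp
qed

lemma supp_sub: "supp n p \<subseteq> {..<n}"
  unfolding supp_def by auto

lemma numr_nonneg:
  assumes "mixed n p" "L \<subseteq> supp n p" "\<sigma> \<in> signs L" "0 \<le> l" "l \<le> 1"
  shows "numr L l p \<sigma> i \<ge> 0"
proof (cases "i \<in> L")
  case True
  hence pi: "p i \<ge> 0" using assms(2) unfolding supp_def by auto
  have a: "l * p i \<le> p i" using pi assms(4,5) by (simp add: mult_left_le_one_le)
  have b: "l * p i \<ge> 0" using pi assms(4) by simp
  have "l * (\<sigma> i * p i) \<ge> - p i"
    using signs_val[OF assms(3) True] a b by auto
  thus ?thesis unfolding numr_def using True by simp
next
  case False
  have "p i \<ge> 0" using assms(1) unfolding mixed_def by (cases "i < n") auto
  thus ?thesis unfolding numr_def using False by simp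
qed

lemma numr_sum:
  assumes "mixed n p" "L \<subseteq> supp n p"
  shows "(\<Sum>i<n. numr L l p \<sigma> i) = 1 + l * ssum L p \<sigma>"
  using assms
  unfolding numr_def mixed_def ssum_def
  by (simp add: sum.distrib sum_distrib_left[symmetric] sum_if_sub[OF order.trans[OF assms(2) supp_sub]])

lemma pert_mixed:
  assumes "mixed n p" "L \<subseteq> supp n p" "\<sigma> \<in> signs L" "0 \<le> l" "l \<le> 1" "\<bar>l * ssum L p \<sigma>\<bar> < 1"
  shows "mixed n (pert L l p \<sigma>)"
proof -
  have D: "1 + l * ssum L p \<sigma> > 0" using assms(6) by linarith
  have nn: "\<forall>i<n. 0 \<le> pert L l p \<sigma> i"
    using numr_nonneg[OF assms(1-5)] D unfolding pert_def by simp
  have out: "\<forall>i\<ge>n. pert L l p \<sigma> i = 0"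
  proof (intro allI impI)
    fix i assume "n \<le> i"
    hence "i \<notin> L" "p i = 0" using assms(1,2) unfolding supp_def mixed_def by auto
    thus "pert L l p \<sigma> i = 0" unfolding pert_def numr_def by simp
  qed
  have "(\<Sum>i<n. pert L l p \<sigma> i) = (\<Sum>i<n. numr L l p \<sigma> i) / (1 + l * ssum L p \<sigma>)"
    unfolding pert_def by (simp add: sum_divide_distrib)
  also have "\<dots> = 1" using numr_sum[OF assms(1,2)] D by simp
  finally show ?thesis unfolding mixed_def using nn out by blast
qed

lemma pert_supp:
  assumes "L \<subseteq> supp n p" "1 + l * ssum L p \<sigma> > 0"
  shows "supp n (pert L l p \<sigma>) \<subseteq> supp n p"
proof
  fix i assume i: "i \<in> supp n (pert L l p \<sigma>)"
  show "i \<in> supp n p"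
  proof (cases "i \<in> L")
    case True thus ?thesis using assms by blast
  next
    case False
    hence "pert L l p \<sigma> i = p i / (1 + l * ssum L p \<sigma>)" unfolding pert_def numr_def by simp
    moreover have "pert L l p \<sigma> i > 0" "i < n" using i unfolding supp_def by auto
    ultimately have "p i > 0" using assms(2) by (simp add: zero_less_divide_iff)
    thus ?thesis using \<open>i < n\<close> unfolding supp_def by simp
  qed
qed

lemma pert_payoff:
  assumes "mixed n p" "L \<subseteq> supp n p" "1 + l * ssum L p \<sigma> > 0"
  shows "(\<Sum>i<n. pert L l p \<sigma> i * A i j) - (\<Sum>i<n. p i * A i j)
         = l * ((\<Sum>i\<in>L. \<sigma> i * (p i * A i j)) - ssum L p \<sigma> * (\<Sum>i<n. p i * A i j)) / (1 + l * ssum L p \<sigma>)"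
proof -
  have Ln: "L \<subseteq> {..<n}" using assms(2) supp_sub by blast
  have "(\<Sum>i<n. numr L l p \<sigma> i * A i j) = (\<Sum>i<n. p i * A i j) + l * (\<Sum>i<n. if i \<in> L then \<sigma> i * (p i * A i j) else 0)"
  proof -
    have "\<And>i. numr L l p \<sigma> i * A i j = p i * A i j + l * (if i \<in> L then \<sigma> i * (p i * A i j) else 0)"
      by (auto simp: numr_def algebra_simps)
    thus ?thesis by (simp add: sum.distrib sum_distrib_left)
  qed
  also have "(\<Sum>i<n. if i \<in> L then \<sigma> i * (p i * A i j) else 0) = (\<Sum>i\<in>L. \<sigma> i * (p i * A i j))"
    by (rule sum_if_sub[OF Ln])
  finally have N: "(\<Sum>i<n. numr L l p \<sigma> i * A i j) = (\<Sum>i<n. p i * A i j) + l * (\<Sum>i\<in>L. \<sigma> i * (p i * A i j))" .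
  have "(\<Sum>i<n. pert L l p \<sigma> i * A i j) = (\<Sum>i<n. numr L l p \<sigma> i * A i j) / (1 + l * ssum L p \<sigma>)"
    unfolding pert_def by (simp add: sum_divide_distrib)
  also have "\<dots> = ((\<Sum>i<n. p i * A i j) + l * (\<Sum>i\<in>L. \<sigma> i * (p i * A i j))) / (1 + l * ssum L p \<sigma>)"
    by (simp add: N)
  finally show ?thesis using assms(3) by (simp add: field_simps)
qed



lemma sign_diff: "\<sigma> \<in> signs L \<Longrightarrow> \<sigma>' \<in> signs L \<Longrightarrow> i \<in> L \<Longrightarrow> \<bar>\<sigma> i - \<sigma>' i\<bar> = 1 - \<sigma>' i * \<sigma> i"
  using signs_val[of \<sigma> L i] signs_val[of \<sigma>' L i] by auto

lemma pert_dist: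
  assumes mp: "mixed n p" and L: "L \<subseteq> supp n p" and s: "\<sigma> \<in> signs L" "\<sigma>' \<in> signs L"
    and l: "0 \<le> l" "l \<le> 1"
    and D: "1 + l * ssum L p \<sigma> > 0" and D': "1 + l * ssum L p \<sigma>' > 0"
  shows "2 * sdist n (pert L l p \<sigma>) (pert L l p \<sigma>')
     \<ge> l * (sum p L - (\<Sum>i\<in>L. \<sigma>' i * (\<sigma> i * p i))) - \<bar>l * ssum L p \<sigma>\<bar> - \<bar>l * ssum L p \<sigma>'\<bar>"
proof -
  define x where "x = numr L l p \<sigma>"
  define x' where "x' = numr L l p \<sigma>'"
  define d where "d = 1 + l * ssum L p \<sigma>"
  define d' where "d' = 1 + l * ssum L p \<sigma>'"
  have Ln: "L \<subseteq> {..<n}" using L supp_sub by blast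
  have xnn: "\<And>i. x i \<ge> 0" "\<And>i. x' i \<ge> 0" unfolding x_def x'_def
    using numr_nonneg[OF mp L s(1) l] numr_nonneg[OF mp L s(2) l] by auto
  have aux: "(\<Sum>i<n. \<bar>y i - y i / e\<bar>) = \<bar>e - 1\<bar>"
    if "\<And>i. y i \<ge> 0" "(\<Sum>i<n. y i) = e" "e > 0" for y :: "nat \<Rightarrow> real" and e
  proof -
    have "(\<Sum>i<n. \<bar>y i - y i / e\<bar>) = (\<Sum>i<n. y i * \<bar>1 - 1 / e\<bar>)"
    proof (intro sum.cong refl)
      fix i
      have "y i - y i / e = y i * (1 - 1 / e)" by (simp add: right_diff_distrib)
      thus "\<bar>y i - y i / e\<bar> = y i * \<bar>1 - 1 / e\<bar>" using that(1)[of i] by (simp add: abs_mult)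
    qed
    also have "\<dots> = e * \<bar>1 - 1 / e\<bar>" using that(2) by (simp add: sum_distrib_right[symmetric])
    also have "\<dots> = \<bar>e - 1\<bar>"
    proof -
      have "e * (1 - 1/e) = e - 1" using that(3) by (simp add: right_diff_distrib)
      thus ?thesis using that(3) by (metis abs_mult abs_of_pos)
    qed
    finally show ?thesis .
  qed
  have ex: "(\<Sum>i<n. \<bar>x i - x i / d\<bar>) = \<bar>l * ssum L p \<sigma>\<bar>"
    using aux[of x d] xnn numr_sum[OF mp L] D unfolding x_def d_def by simp
  have ex': "(\<Sum>i<n. \<bar>x' i - x' i / d'\<bar>) = \<bar>l * ssum L p \<sigma>'\<bar>"
    using aux[of x' d'] xnn numr_sum[OF mp L] D' unfolding x'_def d'_def by simp
  have xx: "(\<Sum>i<n. \<bar>x i - x' i\<bar>) = l * (sum p L - (\<Sum>i\<in>L. \<sigma>' i * (\<sigma> i * p i)))"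
  proof -
    have "(\<Sum>i<n. \<bar>x i - x' i\<bar>) = (\<Sum>i<n. if i \<in> L then l * ((1 - \<sigma>' i * \<sigma> i) * p i) else 0)"
    proof (intro sum.cong refl)
      fix i assume "i \<in> {..<n}"
      show "\<bar>x i - x' i\<bar> = (if i \<in> L then l * ((1 - \<sigma>' i * \<sigma> i) * p i) else 0)"
      proof (cases "i \<in> L")
        case True
        have pi: "p i \<ge> 0" using True L unfolding supp_def by auto
        have "x i - x' i = l * ((\<sigma> i - \<sigma>' i) * p i)" unfolding x_def x'_def numr_def using True
          by (simp add: algebra_simps)
        hence "\<bar>x i - x' i\<bar> = l * (\<bar>\<sigma> i - \<sigma>' i\<bar> * p i)" using l pi by (simp add: abs_mult)
        thus ?thesis using True sign_diff[OF s True] by simp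
      qed (simp add: x_def x'_def numr_def)
    qed
    also have "\<dots> = (\<Sum>i\<in>L. l * ((1 - \<sigma>' i * \<sigma> i) * p i))" by (rule sum_if_sub[OF Ln])
    also have "\<dots> = l * (\<Sum>i\<in>L. p i - \<sigma>' i * (\<sigma> i * p i))"
      by (simp only: sum_distrib_left[symmetric] left_diff_distrib mult_1 mult.assoc)
    also have "\<dots> = l * (sum p L - (\<Sum>i\<in>L. \<sigma>' i * (\<sigma> i * p i)))"
      by (simp only: sum_subtractf)
    finally show ?thesis .
  qed
  have "(\<Sum>i<n. \<bar>x i - x' i\<bar>) - (\<Sum>i<n. \<bar>x i - x i / d\<bar>) - (\<Sum>i<n. \<bar>x' i - x' i / d'\<bar>)
        \<le> (\<Sum>i<n. \<bar>x i / d - x' i / d'\<bar>)"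
  proof -
    have "\<And>i. \<bar>x i - x' i\<bar> - \<bar>x i - x i / d\<bar> - \<bar>x' i - x' i / d'\<bar> \<le> \<bar>x i / d - x' i / d'\<bar>"
      by linarith
    hence "(\<Sum>i<n. \<bar>x i - x' i\<bar> - \<bar>x i - x i / d\<bar> - \<bar>x' i - x' i / d'\<bar>) \<le> (\<Sum>i<n. \<bar>x i / d - x' i / d'\<bar>)"
      by (intro sum_mono)
    thus ?thesis by (simp add: sum_subtractf)
  qed
  moreover have "2 * sdist n (pert L l p \<sigma>) (pert L l p \<sigma>') = (\<Sum>i<n. \<bar>x i / d - x' i / d'\<bar>)"
    unfolding sdist_def pert_def x_def x'_def d_def d'_def by simp
  ultimately show ?thesis using ex ex' xx by linarith
qed

lemma pert_dev:
  assumes mp: "mixed n p" and L: "L \<subseteq> supp n p" and l: "0 < l" "l \<le> 1"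
    and A: "\<forall>i<n. A i j \<in> {0..1}"
    and eta: "l * \<eta> \<le> 1/5" "\<bar>ssum L p \<sigma>\<bar> \<le> \<eta>" "\<bar>\<Sum>i\<in>L. \<sigma> i * (p i * A i j)\<bar> \<le> \<eta>"
  shows "\<bar>(\<Sum>i<n. pert L l p \<sigma> i * A i j) - (\<Sum>i<n. p i * A i j)\<bar> \<le> 5/2 * (l * \<eta>)"
proof -
  define P where "P = (\<Sum>i<n. p i * A i j)"
  define X where "X = (\<Sum>i\<in>L. \<sigma> i * (p i * A i j))"
  define s where "s = ssum L p \<sigma>"
  have P: "0 \<le> P" "P \<le> 1"
  proof -
    show "0 \<le> P" unfolding P_def using mp A unfolding mixed_def by (intro sum_nonneg) auto
    have "P \<le> (\<Sum>i<n. p i)" unfolding P_def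
    proof (intro sum_mono)
      fix i assume i: "i \<in> {..<n}"
      have "0 \<le> p i" "A i j \<le> 1" using mp A i unfolding mixed_def by auto
      thus "p i * A i j \<le> p i" by (rule mult_left_le[rotated])
    qed
    thus "P \<le> 1" using mp unfolding mixed_def by simp
  qed
  have ls: "\<bar>l * s\<bar> \<le> l * \<eta>"
  proof -
    have "\<bar>l * s\<bar> = l * \<bar>s\<bar>" using l by (simp add: abs_mult)
    also have "\<dots> \<le> l * \<eta>" using eta(2) l unfolding s_def by (intro mult_left_mono) auto
    finally show ?thesis .
  qed
  have D: "1 + l * s \<ge> 4/5" using ls eta(1) by linarith
  have "(\<Sum>i<n. pert L l p \<sigma> i * A i j) - P = l * (X - s * P) / (1 + l * s)"
    unfolding P_def X_def s_def by (rule pert_payoff[OF mp L]) (use D in \<open>simp add: s_def\<close>)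
  moreover have "\<bar>l * (X - s * P)\<bar> \<le> 2 * (l * \<eta>)"
  proof -
    have "\<bar>s * P\<bar> = \<bar>s\<bar> * P" using P by (simp add: abs_mult)
    also have "\<dots> \<le> \<bar>s\<bar>" using P by (simp add: mult_left_le)
    finally have "\<bar>s * P\<bar> \<le> \<eta>" using eta(2) unfolding s_def by linarith
    hence "\<bar>X - s * P\<bar> \<le> 2 * \<eta>" using eta(3) unfolding X_def by linarith
    hence "l * \<bar>X - s * P\<bar> \<le> l * (2 * \<eta>)" using l by (intro mult_left_mono) auto
    thus ?thesis using l by (simp add: abs_mult)
  qed
  ultimately have "\<bar>(\<Sum>i<n. pert L l p \<sigma> i * A i j) - P\<bar> \<le> 2 * (l * \<eta>) / (4/5)"
  proof -
    assume e1: "(\<Sum>i<n. pert L l p \<sigma> i * A i j) - P = l * (X - s * P) / (1 + l * s)"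
      and e2: "\<bar>l * (X - s * P)\<bar> \<le> 2 * (l * \<eta>)"
    have "\<bar>l * (X - s * P) / (1 + l * s)\<bar> = \<bar>l * (X - s * P)\<bar> / (1 + l * s)"
      using D by (simp add: abs_divide)
    also have "\<dots> \<le> 2 * (l * \<eta>) / (4/5)"
      using D e2 by (intro frac_le) auto
    finally show ?thesis using e1 by simp
  qed
  thus ?thesis unfolding P_def by (simp add: mult.commute)
qed



lemma hoeffding_V:
  fixes a :: "nat \<Rightarrow> real"
  assumes "finite L" "t > 0" "V > 0" "(\<Sum>i\<in>L. (a i)\<^sup>2) \<le> V"
  shows "real (card {\<sigma>\<in>signs L. (\<Sum>i\<in>L. \<sigma> i * a i) \<ge> t}) \<le> exp (- t\<^sup>2 / (2 * V)) * 2 ^ card L"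
proof (cases "(\<Sum>i\<in>L. (a i)\<^sup>2) = 0")
  case True
  hence "\<forall>i\<in>L. (a i)\<^sup>2 = 0" using sum_nonneg_eq_0_iff[OF assms(1), of "\<lambda>i. (a i)\<^sup>2"] by simp
  hence "\<And>\<sigma>. (\<Sum>i\<in>L. \<sigma> i * a i) = 0" by simp
  hence "{\<sigma>\<in>signs L. (\<Sum>i\<in>L. \<sigma> i * a i) \<ge> t} = {}" using assms(2) by auto
  thus ?thesis by (simp only: card.empty) simp
next
  case False
  define S where "S = (\<Sum>i\<in>L. (a i)\<^sup>2)"
  have S: "S > 0" "S \<le> V" using False assms(4) unfolding S_def by (simp_all add: sum_nonneg order_le_neq_trans)
  have "t\<^sup>2 / (2 * V) \<le> t\<^sup>2 / (2 * S)" using S by (intro divide_left_mono) auto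
  hence "exp (- t\<^sup>2 / (2 * S)) \<le> exp (- t\<^sup>2 / (2 * V))" by simp
  hence "exp (- t\<^sup>2 / (2 * S)) * 2 ^ card L \<le> exp (- t\<^sup>2 / (2 * V)) * 2 ^ card L" by simp
  thus ?thesis using hoeffding_signs[OF assms(1), of t a] assms(2) unfolding S_def by linarith
qed

lemma hoeffding_V_abs:
  fixes a :: "nat \<Rightarrow> real"
  assumes "finite L" "t > 0" "V > 0" "(\<Sum>i\<in>L. (a i)\<^sup>2) \<le> V"
  shows "real (card {\<sigma>\<in>signs L. \<bar>\<Sum>i\<in>L. \<sigma> i * a i\<bar> \<ge> t}) \<le> 2 * exp (- t\<^sup>2 / (2 * V)) * 2 ^ card L"
proof -
  let ?P = "{\<sigma>\<in>signs L. (\<Sum>i\<in>L. \<sigma> i * a i) \<ge> t}"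
  let ?N = "{\<sigma>\<in>signs L. (\<Sum>i\<in>L. \<sigma> i * (- a i)) \<ge> t}"
  have "{\<sigma>\<in>signs L. \<bar>\<Sum>i\<in>L. \<sigma> i * a i\<bar> \<ge> t} \<subseteq> ?P \<union> ?N"
    by (auto simp: sum_negf abs_if split: if_splits)
  moreover have "finite ?P" "finite ?N"
    by (auto intro: finite_subset[OF _ finite_signs[OF assms(1)]])
  ultimately have "card {\<sigma>\<in>signs L. \<bar>\<Sum>i\<in>L. \<sigma> i * a i\<bar> \<ge> t} \<le> card (?P \<union> ?N)"
    by (intro card_mono) auto
  also have "\<dots> \<le> card ?P + card ?N" by (rule card_Un_le)
  finally have "real (card {\<sigma>\<in>signs L. \<bar>\<Sum>i\<in>L. \<sigma> i * a i\<bar> \<ge> t}) \<le> real (card ?P) + real (card ?N)"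
    by linarith
  also have "\<dots> \<le> exp (- t\<^sup>2 / (2 * V)) * 2 ^ card L + exp (- t\<^sup>2 / (2 * V)) * 2 ^ card L"
    using assms by (intro add_mono hoeffding_V) auto
  finally show ?thesis by (simp add: mult.commute mult.left_commute)
qed

lemma card_fibres:
  assumes "finite A" "finite E" "f ` A \<subseteq> E" "\<And>e. e \<in> E \<Longrightarrow> real (card {x\<in>A. f x = e}) \<le> \<beta>"
  shows "real (card A) \<le> real (card E) * \<beta>"
proof -
  have "real (card A) = (\<Sum>x\<in>A. 1)" by simp
  also have "\<dots> = (\<Sum>e\<in>E. \<Sum>x\<in>{x\<in>A. f x = e}. 1)"
    by (rule sum.group[symmetric]) (use assms in auto)
  also have "\<dots> = (\<Sum>e\<in>E. real (card {x\<in>A. f x = e}))" by simp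
  also have "\<dots> \<le> (\<Sum>e\<in>E. \<beta>)" by (intro sum_mono assms(4))
  also have "\<dots> = real (card E) * \<beta>" by simp
  finally show ?thesis .
qed



lemma tail_contra:
  fixes n :: nat and A :: "nat \<Rightarrow> nat \<Rightarrow> real" and p :: "nat \<Rightarrow> real"
    and E :: "(nat \<Rightarrow> real) set" and \<epsilon> \<Delta> M :: real and L :: "nat set"
  assumes n2: "2 \<le> n" and e0: "0 < \<epsilon>" and eD: "\<epsilon> \<le> \<Delta>" and D1: "\<Delta> \<le> 1"
    and A: "\<forall>i<n. \<forall>j<n. A i j \<in> {0..1}" and mp: "mixed n p"
    and fE: "finite E" and cE: "real (card E) \<le> real n powr ((\<Delta>/\<epsilon>)\<^sup>2)"
    and stab: "\<forall>p'. mixed n p' \<and> supp n p' \<subseteq> supp n p \<and>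
                  (\<forall>j<n. \<bar>(\<Sum>i<n. p' i * A i j) - (\<Sum>i<n. p i * A i j)\<bar> \<le> \<epsilon>/2)
                 \<longrightarrow> (\<exists>e\<in>E. sdist n p' e \<le> \<Delta>)"
    and L: "L \<subseteq> supp n p" and m8: "sum p L > 8 * \<Delta>"
    and M_def: "M = 16875 * (\<Delta>/\<epsilon>)\<^sup>2 * ln (real n)"
    and small: "\<forall>i\<in>L. p i \<le> sum p L / M"
  shows False
proof -
  define m where "m = sum p L"
  define r where "r = \<Delta> / \<epsilon>"
  define l where "l = 15 * \<Delta> / (2 * m)"
  define \<eta> where "\<eta> = \<epsilon> / (5 * l)"
  define V where "V = m\<^sup>2 / M"
  have Ln: "L \<subseteq> {..<n}" using L supp_sub by blast
  have fL: "finite L" using Ln finite_subset by blast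
  have pnn: "\<And>i. p i \<ge> 0" using mp unfolding mixed_def by (metis linorder_not_le order_refl)
  have m1: "m \<le> 1"
  proof -
    have "m \<le> (\<Sum>i<n. p i)" unfolding m_def using Ln pnn by (intro sum_mono2) auto
    thus ?thesis using mp unfolding mixed_def by simp
  qed
  have D0: "\<Delta> > 0" using e0 eD by linarith
  have mpos: "m > 8 * \<Delta>" using m8 unfolding m_def .
  have m0: "m > 0" using mpos D0 by linarith
  have r1: "r \<ge> 1" unfolding r_def using e0 eD by simp
  have lnn: "ln (real n) \<ge> ln 2" using n2 by simp
  have ln2: "ln (2::real) > 0" by simp
  have lnpos: "ln (real n) > 0" using lnn ln2 by linarith
  have M: "M = 16875 * r\<^sup>2 * ln (real n)" unfolding M_def r_def ..
  have Mpos: "M > 0" using M r1 lnpos by simp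
  have l0: "l > 0" unfolding l_def using D0 m0 by simp
  have l1: "l \<le> 1" unfolding l_def using mpos m0 by (simp add: field_simps)
  have leta: "l * \<eta> = \<epsilon> / 5" unfolding \<eta>_def using l0 by simp
  have eta0: "\<eta> > 0" unfolding \<eta>_def using e0 l0 by simp
  have V0: "V > 0" unfolding V_def using m0 Mpos by simp
  have S2: "(\<Sum>i\<in>L. (p i)\<^sup>2) \<le> V"
  proof -
    have "(\<Sum>i\<in>L. (p i)\<^sup>2) \<le> (\<Sum>i\<in>L. p i * (m / M))"
      using small pnn unfolding m_def power2_eq_square by (intro sum_mono mult_left_mono) auto
    also have "\<dots> = m * (m / M)" unfolding m_def by (rule sum_distrib_right[symmetric])
    finally show ?thesis unfolding V_def by (simp add: power2_eq_square)
  qed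
  define X where "X \<sigma> j = (\<Sum>i\<in>L. \<sigma> i * (p i * A i j))" for \<sigma> :: "nat \<Rightarrow> real" and j
  define Good where "Good = {\<sigma>\<in>signs L. \<bar>ssum L p \<sigma>\<bar> < \<eta> \<and> (\<forall>j<n. \<bar>X \<sigma> j\<bar> < \<eta>)}"
  define B0 where "B0 = {\<sigma>\<in>signs L. \<bar>\<Sum>i\<in>L. \<sigma> i * p i\<bar> \<ge> \<eta>}"
  define BJ where "BJ j = {\<sigma>\<in>signs L. \<bar>\<Sum>i\<in>L. \<sigma> i * (p i * A i j)\<bar> \<ge> \<eta>}" for j
  have fS: "finite (signs L)" using fL by (rule finite_signs)
  have bad_sub: "signs L - Good \<subseteq> B0 \<union> (\<Union>j<n. BJ j)"
    unfolding Good_def B0_def BJ_def X_def ssum_def by (auto simp: not_less)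
  have expeq: "\<eta>\<^sup>2 / (2 * V) = 6 * ln (real n)"
    unfolding \<eta>_def l_def V_def M using e0 D0 m0 lnpos unfolding r_def
    by (simp add: field_simps power2_eq_square)
  have ex6: "exp (- (6 * ln (real n))) = 1 / real n ^ 6"
  proof -
    have "exp (real 6 * ln (real n)) = exp (ln (real n)) ^ 6" by (rule exp_of_nat_mult)
    hence "exp (6 * ln (real n)) = real n ^ 6" using n2 by simp
    thus ?thesis by (simp add: exp_minus divide_inverse)
  qed
  have nb: "2 * (real n + 1) * 2 * (1 / real n ^ 6) \<le> 1 / 2"
  proof -
    have n2': "real n \<ge> 2" using n2 by simp
    have "real n ^ 5 \<ge> 2 ^ 5" using n2' by (intro power_mono) auto
    hence "real n * 32 \<le> real n * real n ^ 5" using n2' by (intro mult_left_mono) auto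
    moreover have "real n * real n ^ 5 = real n ^ 6" by (simp add: power_Suc[symmetric] del: power_Suc)
    ultimately have "real n ^ 6 \<ge> 32 * real n" by (simp add: mult.commute)
    moreover have "8 * (real n + 1) \<le> 32 * real n" using n2' by simp
    ultimately have "8 * (real n + 1) \<le> real n ^ 6" by (rule order_trans[rotated])
    thus ?thesis using n2' by (simp add: field_simps)
  qed
  have cB0: "real (card B0) \<le> 2 * exp (- \<eta>\<^sup>2 / (2 * V)) * 2 ^ card L"
    unfolding B0_def by (rule hoeffding_V_abs[OF fL eta0 V0 S2])
  have cBJ: "real (card (BJ j)) \<le> 2 * exp (- \<eta>\<^sup>2 / (2 * V)) * 2 ^ card L" if "j < n" for j
  proof -
    have "(\<Sum>i\<in>L. (p i * A i j)\<^sup>2) \<le> (\<Sum>i\<in>L. (p i)\<^sup>2)"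
    proof (intro sum_mono)
      fix i assume i: "i \<in> L"
      have "0 \<le> A i j" "A i j \<le> 1" using A i Ln that by auto
      hence "(A i j)\<^sup>2 \<le> 1" by (simp add: power_le_one)
      hence "(p i)\<^sup>2 * (A i j)\<^sup>2 \<le> (p i)\<^sup>2" by (simp add: mult_left_le)
      thus "(p i * A i j)\<^sup>2 \<le> (p i)\<^sup>2" by (simp add: power_mult_distrib)
    qed
    thus ?thesis unfolding BJ_def using S2 by (intro hoeffding_V_abs[OF fL eta0 V0]) auto
  qed
  have "card (signs L - Good) \<le> card (B0 \<union> (\<Union>j<n. BJ j))"
    using bad_sub fS unfolding B0_def BJ_def by (intro card_mono) auto
  also have "\<dots> \<le> card B0 + card (\<Union>j<n. BJ j)" by (rule card_Un_le)
  also have "card (\<Union>j<n. BJ j) \<le> (\<Sum>j<n. card (BJ j))" by (rule card_UN_le) simp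
  finally have "card (signs L - Good) \<le> card B0 + (\<Sum>j<n. card (BJ j))" by simp
  hence "real (card (signs L - Good)) \<le> real (card B0 + (\<Sum>j<n. card (BJ j)))" by (rule of_nat_mono)
  hence "real (card (signs L - Good)) \<le> real (card B0) + (\<Sum>j<n. real (card (BJ j)))" by simp
  also have "\<dots> \<le> 2 * exp (- \<eta>\<^sup>2 / (2 * V)) * 2 ^ card L + (\<Sum>j<n. 2 * exp (- \<eta>\<^sup>2 / (2 * V)) * 2 ^ card L)"
    using cB0 cBJ by (intro add_mono sum_mono) auto
  also have "\<dots> = 2 * (real n + 1) * exp (- \<eta>\<^sup>2 / (2 * V)) * 2 ^ card L"
    by (simp add: distrib_left distrib_right)
  also have "exp (- \<eta>\<^sup>2 / (2 * V)) = 1 / real n ^ 6" using expeq ex6 by simp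
  finally have cbad: "real (card (signs L - Good)) \<le> 2 * (real n + 1) * (1 / real n ^ 6) * 2 ^ card L" .
  have GoodS: "Good \<subseteq> signs L" unfolding Good_def by auto
  have cS: "real (card (signs L)) = 2 ^ card L" using card_signs[OF fL] by simp
  have "card (signs L) = card Good + card (signs L - Good)"
    using card_Diff_subset[OF finite_subset[OF GoodS fS] GoodS] card_mono[OF fS GoodS] by simp
  hence cs2: "real (card Good) + real (card (signs L - Good)) = 2 ^ card L" using cS by simp
  have "2 * (real n + 1) * (1 / real n ^ 6) \<le> 1/4" using nb by simp
  hence "2 * (real n + 1) * (1 / real n ^ 6) * 2 ^ card L \<le> 1/4 * 2 ^ card L"
    by (intro mult_right_mono) auto
  hence cgood: "real (card Good) \<ge> 2 ^ card L / 2"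
    using cs2 cbad by linarith
  have good_props: "mixed n (pert L l p \<sigma>) \<and> supp n (pert L l p \<sigma>) \<subseteq> supp n p \<and>
      (\<forall>j<n. \<bar>(\<Sum>i<n. pert L l p \<sigma> i * A i j) - (\<Sum>i<n. p i * A i j)\<bar> \<le> \<epsilon>/2)
      \<and> \<bar>l * ssum L p \<sigma>\<bar> \<le> \<epsilon>/5"
    if s: "\<sigma> \<in> Good" for \<sigma>
  proof -
    have sg: "\<sigma> \<in> signs L" "\<bar>ssum L p \<sigma>\<bar> < \<eta>" "\<forall>j<n. \<bar>X \<sigma> j\<bar> < \<eta>" using s unfolding Good_def by auto
    have ls: "\<bar>l * ssum L p \<sigma>\<bar> \<le> \<epsilon>/5"
    proof -
      have "\<bar>l * ssum L p \<sigma>\<bar> = l * \<bar>ssum L p \<sigma>\<bar>" using l0 by (simp add: abs_mult)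
      also have "\<dots> \<le> l * \<eta>" using sg(2) l0 by (intro mult_left_mono) auto
      finally show ?thesis using leta by simp
    qed
    have ls1: "\<bar>l * ssum L p \<sigma>\<bar> < 1" using ls e0 eD D1 by linarith
    have D: "1 + l * ssum L p \<sigma> > 0" using ls1 by linarith
    have dev: "\<bar>(\<Sum>i<n. pert L l p \<sigma> i * A i j) - (\<Sum>i<n. p i * A i j)\<bar> \<le> \<epsilon>/2" if j: "j < n" for j
    proof -
      have "\<bar>(\<Sum>i<n. pert L l p \<sigma> i * A i j) - (\<Sum>i<n. p i * A i j)\<bar> \<le> 5/2 * (l * \<eta>)"
        using A j sg e0 eD D1 leta unfolding X_def
        by (intro pert_dev[OF mp L l0 l1]) auto
      thus ?thesis using leta by simp
    qed
    show ?thesis using pert_mixed[OF mp L sg(1) _ l1 ls1] l0 pert_supp[OF L D] dev ls by auto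
  qed
  define f where "f \<sigma> = (SOME e. e \<in> E \<and> sdist n (pert L l p \<sigma>) e \<le> \<Delta>)" for \<sigma>
  have f: "f \<sigma> \<in> E \<and> sdist n (pert L l p \<sigma>) (f \<sigma>) \<le> \<Delta>" if "\<sigma> \<in> Good" for \<sigma>
  proof -
    have "\<exists>e\<in>E. sdist n (pert L l p \<sigma>) e \<le> \<Delta>" using stab good_props[OF that] by blast
    hence "\<exists>e. e \<in> E \<and> sdist n (pert L l p \<sigma>) e \<le> \<Delta>" by blast
    thus ?thesis unfolding f_def by (rule someI_ex)
  qed
  define \<beta> where "\<beta> = exp (- M / 18) * 2 ^ card L"
  have fib: "real (card {\<sigma>\<in>Good. f \<sigma> = e}) \<le> \<beta>" for e
  proof (cases "{\<sigma>\<in>Good. f \<sigma> = e} = {}")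
    case True show ?thesis unfolding \<beta>_def by (simp only: True card.empty) simp
  next
    case False
    then obtain \<sigma>0 where s0: "\<sigma>0 \<in> Good" "f \<sigma>0 = e" by auto
    have sub: "{\<sigma>\<in>Good. f \<sigma> = e} \<subseteq> {\<sigma>\<in>signs L. (\<Sum>i\<in>L. \<sigma> i * (\<sigma>0 i * p i)) \<ge> m/3}"
    proof
      fix \<sigma> assume "\<sigma> \<in> {\<sigma>\<in>Good. f \<sigma> = e}"
      hence s: "\<sigma> \<in> Good" "f \<sigma> = e" by auto
      have sg: "\<sigma> \<in> signs L" "\<sigma>0 \<in> signs L" using s(1) s0(1) unfolding Good_def by auto
      have "sdist n (pert L l p \<sigma>0) (pert L l p \<sigma>) \<le> sdist n (pert L l p \<sigma>0) e + sdist n e (pert L l p \<sigma>)"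
        by (rule sdist_triangle)
      also have "\<dots> \<le> 2 * \<Delta>" using f[OF s(1)] f[OF s0(1)] s(2) s0(2) sdist_sym[of n e] by auto
      finally have d2: "sdist n (pert L l p \<sigma>0) (pert L l p \<sigma>) \<le> 2 * \<Delta>" .
      have g0: "\<bar>l * ssum L p \<sigma>0\<bar> \<le> \<epsilon>/5" "\<bar>l * ssum L p \<sigma>\<bar> \<le> \<epsilon>/5"
        using good_props[OF s0(1)] good_props[OF s(1)] by auto
      have D: "1 + l * ssum L p \<sigma>0 > 0" "1 + l * ssum L p \<sigma> > 0" using g0 e0 eD D1 by linarith+
      have "l * (m - (\<Sum>i\<in>L. \<sigma> i * (\<sigma>0 i * p i))) - \<bar>l * ssum L p \<sigma>0\<bar> - \<bar>l * ssum L p \<sigma>\<bar>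
            \<le> 2 * sdist n (pert L l p \<sigma>0) (pert L l p \<sigma>)"
        unfolding m_def by (rule pert_dist[OF mp L sg(2) sg(1) _ l1 D]) (use l0 in simp)
      hence "l * (m - (\<Sum>i\<in>L. \<sigma> i * (\<sigma>0 i * p i))) \<le> 4 * \<Delta> + 2 * \<epsilon> / 5"
        using d2 g0 by linarith
      hence "l * (m - (\<Sum>i\<in>L. \<sigma> i * (\<sigma>0 i * p i))) \<le> 22/5 * \<Delta>" using eD by linarith
      hence "15 * \<Delta> * (m - (\<Sum>i\<in>L. \<sigma> i * (\<sigma>0 i * p i))) \<le> 44/5 * \<Delta> * m"
        unfolding l_def using m0 by (simp add: field_simps)
      hence "15 * (m - (\<Sum>i\<in>L. \<sigma> i * (\<sigma>0 i * p i))) \<le> 44/5 * m"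
        using D0 by (simp add: mult.assoc)
      hence "(\<Sum>i\<in>L. \<sigma> i * (\<sigma>0 i * p i)) \<ge> m/3" using m0
        by (simp add: algebra_simps)
      thus "\<sigma> \<in> {\<sigma>\<in>signs L. (\<Sum>i\<in>L. \<sigma> i * (\<sigma>0 i * p i)) \<ge> m/3}" using sg by simp
    qed
    have sq: "(\<Sum>i\<in>L. (\<sigma>0 i * p i)\<^sup>2) \<le> V"
    proof -
      have "(\<Sum>i\<in>L. (\<sigma>0 i * p i)\<^sup>2) = (\<Sum>i\<in>L. (p i)\<^sup>2)"
      proof (intro sum.cong refl)
        fix i assume "i \<in> L"
        hence "\<sigma>0 i * \<sigma>0 i = 1" using signs_sq s0(1) unfolding Good_def by blast
        thus "(\<sigma>0 i * p i)\<^sup>2 = (p i)\<^sup>2" by (simp add: power2_eq_square algebra_simps)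
      qed
      thus ?thesis using S2 by simp
    qed
    have "real (card {\<sigma>\<in>Good. f \<sigma> = e}) \<le> real (card {\<sigma>\<in>signs L. (\<Sum>i\<in>L. \<sigma> i * (\<sigma>0 i * p i)) \<ge> m/3})"
      using sub by (intro of_nat_mono card_mono) (auto intro: finite_subset[OF _ fS])
    also have "\<dots> \<le> exp (- (m/3)\<^sup>2 / (2 * V)) * 2 ^ card L"
      by (rule hoeffding_V[OF fL _ V0 sq]) (use m0 in simp)
    also have "(m/3)\<^sup>2 / (2 * V) = M / 18" unfolding V_def using m0 Mpos by (simp add: field_simps power2_eq_square)
    hence "exp (- (m/3)\<^sup>2 / (2 * V)) = exp (- M / 18)" by simp
    finally show ?thesis unfolding \<beta>_def by simp
  qed
  have "real (card Good) \<le> real (card E) * \<beta>"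
    by (rule card_fibres[OF finite_subset[OF GoodS fS] fE _ fib]) (use f in auto)
  hence "2 ^ card L / 2 \<le> real (card E) * (exp (- M / 18) * 2 ^ card L)"
    using cgood unfolding \<beta>_def by linarith
  hence half: "1 / 2 \<le> real (card E) * exp (- M / 18)" by (simp add: field_simps)
  have "real (card E) * exp (- M / 18) \<le> exp (r\<^sup>2 * ln (real n)) * exp (- M / 18)"
    using cE n2 unfolding r_def by (intro mult_right_mono) (auto simp: powr_def mult.commute)
  also have "\<dots> = exp (- (r\<^sup>2 * ln (real n) * (16875/18 - 1)))"
    unfolding M by (simp add: mult_exp_exp algebra_simps)
  also have "\<dots> \<le> exp (- (2 * ln (real n)))"
  proof -
    have "r\<^sup>2 \<ge> 1" using r1 by (simp add: one_le_power)
    hence "r\<^sup>2 * ln (real n) \<ge> ln (real n)" using lnpos by simp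
    moreover have "r\<^sup>2 * ln (real n) * (16875/18 - 1) = (16857/18) * (r\<^sup>2 * ln (real n))" by simp
    ultimately have "r\<^sup>2 * ln (real n) * (16875/18 - 1) \<ge> 2 * ln (real n)" using lnpos by linarith
    thus ?thesis by simp
  qed
  also have "exp (- (2 * ln (real n))) = 1 / (real n * real n)"
  proof -
    have "exp (2 * ln (real n)) = exp (ln (real n)) * exp (ln (real n))"
      by (simp add: mult_exp_exp)
    also have "\<dots> = real n * real n" using n2 by simp
    finally show ?thesis by (simp add: exp_minus divide_inverse)
  qed
  also have "\<dots> \<le> 1 / 4"
  proof -
    have "real n * real n \<ge> 2 * 2" using n2 by (intro mult_mono) auto
    thus ?thesis by (simp add: field_simps)
  qed
  finally show False using half by linarith
qed



lemma core:
  fixes n :: nat and A :: "nat \<Rightarrow> nat \<Rightarrow> real" and p :: "nat \<Rightarrow> real"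
    and E :: "(nat \<Rightarrow> real) set" and \<epsilon> \<Delta> :: real
  assumes n2: "2 \<le> n" and e0: "0 < \<epsilon>" and eD: "\<epsilon> \<le> \<Delta>" and D1: "\<Delta> \<le> 1"
    and A: "\<forall>i<n. \<forall>j<n. A i j \<in> {0..1}" and mp: "mixed n p"
    and fE: "finite E" and cE: "real (card E) \<le> real n powr ((\<Delta>/\<epsilon>)\<^sup>2)"
    and stab: "\<forall>p'. mixed n p' \<and> supp n p' \<subseteq> supp n p \<and>
                  (\<forall>j<n. \<bar>(\<Sum>i<n. p' i * A i j) - (\<Sum>i<n. p i * A i j)\<bar> \<le> \<epsilon>/2)
                 \<longrightarrow> (\<exists>e\<in>E. sdist n p' e \<le> \<Delta>)"
  shows "\<exists>p'. mixed n p' \<and> real (card (supp n p')) \<le> 16900 * (\<Delta>/\<epsilon>)\<^sup>2 * ln (1 + 1/\<Delta>) * ln (real n)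
              \<and> sdist n p p' \<le> 8 * \<Delta>"
proof -
  define M where "M = 16875 * (\<Delta>/\<epsilon>)\<^sup>2 * ln (real n)"
  define tl where "tl H = (\<Sum>i\<in>{..<n} - H. p i)" for H
  define good where "good H \<longleftrightarrow> tl H > 8 * \<Delta> \<and> (\<forall>i\<in>{..<n} - H. p i \<le> tl H / M)" for H
  have pnn: "\<And>i. p i \<ge> 0" using mp unfolding mixed_def by (metis linorder_not_le order_refl)
  have D0: "\<Delta> > 0" using e0 eD by linarith
  have r1: "(\<Delta>/\<epsilon>)\<^sup>2 \<ge> 1" using e0 eD by (simp add: one_le_power)
  have ln2: "ln (2::real) \<ge> 1/2"
  proof -
    have "ln (1/2::real) \<le> 1/2 - 1" by (rule ln_le_minus_one) simp
    thus ?thesis by (simp add: ln_div)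
  qed
  have "ln (real n) \<ge> ln 2" using n2 by simp
  hence lnn: "ln (real n) \<ge> 1/2" using ln2 by linarith
  have M1: "M \<ge> 1"
  proof -
    have "(\<Delta>/\<epsilon>)\<^sup>2 * ln (real n) \<ge> 1 * (1/2)" using r1 lnn by (intro mult_mono) auto
    thus ?thesis unfolding M_def by linarith
  qed
  have tl_le1: "tl H \<le> 1" for H
  proof -
    have "tl H \<le> (\<Sum>i<n. p i)" unfolding tl_def using pnn by (intro sum_mono2) auto
    thus ?thesis using mp unfolding mixed_def by simp
  qed
  have step: "\<exists>H. H \<subseteq> {..<n} \<and> card H \<le> k \<and> (good H \<or> tl H \<le> max (8 * \<Delta>) ((1 - 1/M) ^ k))" for k
  proof (induction k)
    case 0
    show ?case using tl_le1[of "{}"] by (intro exI[of _ "{}"]) auto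
  next
    case (Suc k)
    then obtain H where H: "H \<subseteq> {..<n}" "card H \<le> k" "good H \<or> tl H \<le> max (8 * \<Delta>) ((1 - 1/M) ^ k)"
      by blast
    show ?case
    proof (cases "good H \<or> tl H \<le> 8 * \<Delta>")
      case True thus ?thesis using H by (intro exI[of _ H]) auto
    next
      case False
      hence t8: "tl H > 8 * \<Delta>" and tk: "tl H \<le> (1 - 1/M) ^ k" using H(3) by auto
      from False t8 obtain i where i: "i \<in> {..<n} - H" "p i > tl H / M" unfolding good_def by force
      define H' where "H' = insert i H"
      have fH: "finite H" using H(1) finite_subset by blast
      have "tl H' = tl H - p i"
      proof -
        have "{..<n} - H = insert i ({..<n} - H')" using i unfolding H'_def by auto
        moreover have "i \<notin> {..<n} - H'" unfolding H'_def by auto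
        ultimately have "tl H = p i + tl H'" unfolding tl_def by simp
        thus ?thesis by simp
      qed
      also have "\<dots> \<le> tl H * (1 - 1/M)" using i M1 by (simp add: field_simps)
      also have "\<dots> \<le> (1 - 1/M) ^ k * (1 - 1/M)" using tk M1 by (intro mult_right_mono) auto
      finally have "tl H' \<le> (1 - 1/M) ^ Suc k" by (simp add: mult.commute)
      moreover have "card H' \<le> Suc k" unfolding H'_def using H(2) fH by (simp add: card_insert_if)
      moreover have "H' \<subseteq> {..<n}" unfolding H'_def using H(1) i by auto
      ultimately show ?thesis by (intro exI[of _ H']) auto
    qed
  qed
  define K where "K = nat \<lceil>M * ln (1 / (8 * \<Delta>))\<rceil>"
  obtain H where H: "H \<subseteq> {..<n}" "card H \<le> K" "good H \<or> tl H \<le> max (8 * \<Delta>) ((1 - 1/M) ^ K)"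
    using step by blast
  have ng: "\<not> good H"
  proof
    assume g: "good H"
    have sumL: "sum p (supp n p - H) = tl H"
      unfolding tl_def supp_def using pnn
      by (intro sum.mono_neutral_left) (auto simp: order_le_less)
    show False
    proof (rule tail_contra[OF n2 e0 eD D1 A mp fE cE stab, of "supp n p - H" M])
      show "supp n p - H \<subseteq> supp n p" by blast
      show "sum p (supp n p - H) > 8 * \<Delta>" using g sumL unfolding good_def by simp
      show "M = 16875 * (\<Delta> / \<epsilon>)\<^sup>2 * ln (real n)" by (rule M_def)
      show "\<forall>i\<in>supp n p - H. p i \<le> sum p (supp n p - H) / M"
        using g sumL unfolding good_def supp_def by auto
    qed
  qed
  have powK: "(1 - 1/M) ^ K \<le> 8 * \<Delta>" if "8 * \<Delta> < 1"
  proof -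
    have "(1 - 1/M) ^ K \<le> exp (- 1/M) ^ K"
      using M1 exp_ge_add_one_self[of "-1/M"] by (intro power_mono) (auto simp: field_simps)
    also have "\<dots> = exp (real K * (- 1/M))" by (rule exp_of_nat_mult[symmetric])
    also have "\<dots> \<le> exp (- ln (1 / (8 * \<Delta>)))"
    proof -
      have "real K \<ge> M * ln (1 / (8 * \<Delta>))" unfolding K_def by linarith
      hence "real K / M \<ge> ln (1 / (8 * \<Delta>))" using M1 by (simp add: field_simps)
      thus ?thesis by simp
    qed
    also have "\<dots> = 8 * \<Delta>" using D0 by (simp add: ln_div exp_minus)
    finally show ?thesis .
  qed
  have t8: "tl H \<le> 8 * \<Delta>"
  proof (cases "8 * \<Delta> < 1")
    case True thus ?thesis using H(3) ng powK by auto
  next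
    case False thus ?thesis using tl_le1[of H] by linarith
  qed
  define p' where "p' i = (if i \<in> H then p i else 0) + (if i = 0 then tl H else 0)" for i
  have fH: "finite H" using H(1) finite_subset by blast
  have n0: "0 < n" using n2 by simp
  have tl0: "tl H \<ge> 0" unfolding tl_def using pnn by (intro sum_nonneg) auto
  have sumH: "(\<Sum>i<n. if i \<in> H then p i else 0) = sum p H" by (rule sum_if_sub[OF H(1)])
  have sum0: "(\<Sum>i<n. if i = 0 then tl H else 0) = tl H" using n0 by simp
  have mp': "mixed n p'"
  proof -
    have "(\<Sum>i<n. p' i) = sum p H + tl H" unfolding p'_def by (simp add: sum.distrib sumH sum0)
    also have "\<dots> = (\<Sum>i<n. p i)" unfolding tl_def using sum.subset_diff[of H "{..<n}" p] H(1) by simp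
    finally have "(\<Sum>i<n. p' i) = 1" using mp unfolding mixed_def by simp
    moreover have "\<forall>i<n. 0 \<le> p' i" unfolding p'_def using pnn tl0 by simp
    moreover have "\<forall>i\<ge>n. p' i = 0" unfolding p'_def using H(1) n0 by auto
    ultimately show ?thesis unfolding mixed_def by blast
  qed
  have "supp n p' \<subseteq> insert 0 H" unfolding supp_def p'_def by auto
  hence "card (supp n p') \<le> card (insert 0 H)" using fH by (intro card_mono) auto
  also have "\<dots> \<le> K + 1" using H(2) fH by (simp add: card_insert_if)
  finally have cs: "real (card (supp n p')) \<le> real K + 1" by linarith
  have lnb: "ln (1 + 1/\<Delta>) \<ge> 1/2"
  proof -
    have "1 + 1/\<Delta> \<ge> 2" using D0 D1 by (simp add: field_simps)
    hence "ln (1 + 1/\<Delta>) \<ge> ln 2" by simp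
    thus ?thesis using ln2 by linarith
  qed
  have lnpos': "ln (1 + 1/\<Delta>) > 0" using lnb by linarith
  have Kb: "real K \<le> M * ln (1 + 1/\<Delta>) + 1"
  proof (cases "M * ln (1 / (8 * \<Delta>)) \<ge> 0")
    case True
    have c0: "\<lceil>M * ln (1 / (8 * \<Delta>))\<rceil> \<ge> 0" using True by simp
    have "real K = of_int \<lceil>M * ln (1 / (8 * \<Delta>))\<rceil>" unfolding K_def using c0 by simp
    also have "\<dots> \<le> M * ln (1 / (8 * \<Delta>)) + 1" by (rule of_int_ceiling_le_add_one)
    also have "M * ln (1 / (8 * \<Delta>)) \<le> M * ln (1 + 1/\<Delta>)"
    proof -
      have "1 / (8 * \<Delta>) \<le> 1 + 1/\<Delta>" using D0 by (simp add: field_simps)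
      moreover have "0 < 1 / (8 * \<Delta>)" "0 < 1 + 1/\<Delta>" using D0 by (simp_all add: add_pos_pos)
      ultimately have "ln (1 / (8 * \<Delta>)) \<le> ln (1 + 1/\<Delta>)" by (simp only: ln_le_cancel_iff)
      thus ?thesis using M1 by (intro mult_left_mono) auto
    qed
    finally show ?thesis by simp
  next
    case False
    hence "K = 0" unfolding K_def by simp
    thus ?thesis using M1 lnpos' by simp
  qed
  have Q: "(\<Delta>/\<epsilon>)\<^sup>2 * ln (1 + 1/\<Delta>) * ln (real n) \<ge> 1/4"
  proof -
    have "(\<Delta>/\<epsilon>)\<^sup>2 * ln (1 + 1/\<Delta>) \<ge> 1 * (1/2)" using r1 lnb by (intro mult_mono) auto
    hence "(\<Delta>/\<epsilon>)\<^sup>2 * ln (1 + 1/\<Delta>) * ln (real n) \<ge> (1/2) * (1/2)"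
      using lnn by (intro mult_mono) auto
    thus ?thesis by simp
  qed
  have "M * ln (1 + 1/\<Delta>) = 16875 * ((\<Delta>/\<epsilon>)\<^sup>2 * ln (1 + 1/\<Delta>) * ln (real n))"
    unfolding M_def by (simp add: mult.commute mult.left_commute)
  moreover have "16900 * (\<Delta>/\<epsilon>)\<^sup>2 * ln (1 + 1/\<Delta>) * ln (real n)
      = 16900 * ((\<Delta>/\<epsilon>)\<^sup>2 * ln (1 + 1/\<Delta>) * ln (real n))" by (simp add: mult.assoc)
  ultimately have card_ok: "real (card (supp n p')) \<le> 16900 * (\<Delta>/\<epsilon>)\<^sup>2 * ln (1 + 1/\<Delta>) * ln (real n)"
    using cs Kb Q by linarith
  have dist_ok: "sdist n p p' \<le> 8 * \<Delta>"
  proof -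
    have pw: "\<bar>p i - p' i\<bar> \<le> (p i - (if i \<in> H then p i else 0)) + (if i = 0 then tl H else 0)" for i
      unfolding p'_def using pnn[of i] tl0 by auto
    have "(\<Sum>i<n. \<bar>p i - p' i\<bar>) \<le> (\<Sum>i<n. (p i - (if i \<in> H then p i else 0)) + (if i = 0 then tl H else 0))"
      by (intro sum_mono pw)
    also have "\<dots> = (\<Sum>i<n. p i) - sum p H + tl H" by (simp add: sum.distrib sum_subtractf sumH sum0)
    also have "(\<Sum>i<n. p i) - sum p H = tl H" unfolding tl_def using sum.subset_diff[of H "{..<n}" p] H(1) by simp
    finally have "(\<Sum>i<n. \<bar>p i - p' i\<bar>) \<le> 2 * tl H" by simp
    thus ?thesis unfolding sdist_def using t8 by simp
  qed
  show ?thesis using mp' card_ok dist_ok by blast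
qed



lemma part1:
  assumes n2: "2 \<le> n" and e0: "0 < \<epsilon>" and eD: "\<epsilon> \<le> \<Delta>" and D1: "\<Delta> \<le> 1"
    and RC: "\<forall>i<n. \<forall>j<n. R i j \<in> {0..1} \<and> C i j \<in> {0..1}"
    and fin: "finite (nash_set n R C)"
    and cN: "real (card (nash_set n R C)) \<le> real n powr (1 * (\<Delta> / \<epsilon>)\<^sup>2)"
    and ws: "ws_approx_stable n R C \<epsilon> \<Delta>"
    and ne: "nash n R C p q"
  shows "\<exists>p' q'. mixed n p' \<and> mixed n q' \<and>
           real (card (supp n p')) \<le> 16900 * (\<Delta>/\<epsilon>)\<^sup>2 * ln (1 + 1/\<Delta>) * ln (real n) \<and>
           real (card (supp n q')) \<le> 16900 * (\<Delta>/\<epsilon>)\<^sup>2 * ln (1 + 1/\<Delta>) * ln (real n) \<and>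
           pdist n (p, q) (p', q') \<le> 8 * \<Delta>"
proof -
  have mp: "mixed n p" "mixed n q" using ne unfolding nash_def by auto
  have cN': "real (card (nash_set n R C)) \<le> real n powr ((\<Delta> / \<epsilon>)\<^sup>2)" using cN by simp
  have c1: "real (card (fst ` nash_set n R C)) \<le> real n powr ((\<Delta> / \<epsilon>)\<^sup>2)"
    using card_image_le[OF fin, of fst] cN' by linarith
  have c2: "real (card (snd ` nash_set n R C)) \<le> real n powr ((\<Delta> / \<epsilon>)\<^sup>2)"
    using card_image_le[OF fin, of snd] cN' by linarith
  have AC: "\<forall>i<n. \<forall>j<n. C i j \<in> {0..1}" using RC by blast
  have AR: "\<forall>i<n. \<forall>j<n. (\<lambda>k i. R i k) i j \<in> {0..1}" using RC by blast
  have stab1: "\<forall>p'. mixed n p' \<and> supp n p' \<subseteq> supp n p \<and>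
                  (\<forall>j<n. \<bar>(\<Sum>i<n. p' i * C i j) - (\<Sum>i<n. p i * C i j)\<bar> \<le> \<epsilon>/2)
                 \<longrightarrow> (\<exists>e\<in>fst ` nash_set n R C. sdist n p' e \<le> \<Delta>)"
  proof (intro allI impI)
    fix p' assume h: "mixed n p' \<and> supp n p' \<subseteq> supp n p \<and>
                  (\<forall>j<n. \<bar>(\<Sum>i<n. p' i * C i j) - (\<Sum>i<n. p i * C i j)\<bar> \<le> \<epsilon>/2)"
    have "ws_eq n R C \<epsilon> p' q" using h by (intro ws_row_perturb[OF ne e0]) auto
    then obtain pq' where pq': "pq' \<in> nash_set n R C" "pdist n (p', q) pq' \<le> \<Delta>"
      using ws unfolding ws_approx_stable_def by blast
    have "sdist n p' (fst pq') \<le> \<Delta>" using pq'(2) unfolding pdist_def by simp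
    thus "\<exists>e\<in>fst ` nash_set n R C. sdist n p' e \<le> \<Delta>" using pq'(1) by blast
  qed
  have stab2: "\<forall>q'. mixed n q' \<and> supp n q' \<subseteq> supp n q \<and>
                  (\<forall>j<n. \<bar>(\<Sum>i<n. q' i * (\<lambda>k i. R i k) i j) - (\<Sum>i<n. q i * (\<lambda>k i. R i k) i j)\<bar> \<le> \<epsilon>/2)
                 \<longrightarrow> (\<exists>e\<in>snd ` nash_set n R C. sdist n q' e \<le> \<Delta>)"
  proof (intro allI impI)
    fix q' assume h: "mixed n q' \<and> supp n q' \<subseteq> supp n q \<and>
                  (\<forall>j<n. \<bar>(\<Sum>i<n. q' i * (\<lambda>k i. R i k) i j) - (\<Sum>i<n. q i * (\<lambda>k i. R i k) i j)\<bar> \<le> \<epsilon>/2)"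
    have "ws_eq n R C \<epsilon> p q'" using h by (intro ws_col_perturb[OF ne e0]) auto
    then obtain pq' where pq': "pq' \<in> nash_set n R C" "pdist n (p, q') pq' \<le> \<Delta>"
      using ws unfolding ws_approx_stable_def by blast
    have "sdist n q' (snd pq') \<le> \<Delta>" using pq'(2) unfolding pdist_def by simp
    thus "\<exists>e\<in>snd ` nash_set n R C. sdist n q' e \<le> \<Delta>" using pq'(1) by blast
  qed
  obtain p' where p': "mixed n p'" "real (card (supp n p')) \<le> 16900 * (\<Delta>/\<epsilon>)\<^sup>2 * ln (1 + 1/\<Delta>) * ln (real n)"
    "sdist n p p' \<le> 8 * \<Delta>"
    using core[OF n2 e0 eD D1 AC mp(1) finite_imageI[OF fin] c1 stab1] by blast
  obtain q' where q': "mixed n q'" "real (card (supp n q')) \<le> 16900 * (\<Delta>/\<epsilon>)\<^sup>2 * ln (1 + 1/\<Delta>) * ln (real n)"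
    "sdist n q q' \<le> 8 * \<Delta>"
    using core[OF n2 e0 eD D1 AR mp(2) finite_imageI[OF fin] c2 stab2] by blast
  show ?thesis using p' q' unfolding pdist_def by (intro exI[of _ p'] exI[of _ q']) auto
qed

theorem theorem3:
  "\<exists>a b :: real. a > 0 \<and> b > 0 \<and>
    (\<forall>(n::nat) (R::nat \<Rightarrow> nat \<Rightarrow> real) (C::nat \<Rightarrow> nat \<Rightarrow> real) (\<epsilon>::real) (\<Delta>::real).
      2 \<le> n \<and> 0 < \<epsilon> \<and> \<epsilon> \<le> \<Delta> \<and> \<Delta> \<le> 1 \<and>
      (\<forall>i<n. \<forall>j<n. R i j \<in> {0..1} \<and> C i j \<in> {0..1}) \<and>
      finite (nash_set n R C) \<and>
      real (card (nash_set n R C)) \<le> real n powr (a * (\<Delta> / \<epsilon>)\<^sup>2) \<and>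
      (ws_approx_stable n R C \<epsilon> \<Delta> \<or> perturb_stable n R C (\<epsilon> / 2) \<Delta>)
      \<longrightarrow>
      (let k = b * (\<Delta> / \<epsilon>)\<^sup>2 * ln (1 + 1 / \<Delta>) * ln (real n) in
        (\<forall>p q. nash n R C p q \<longrightarrow>
           (\<exists>p' q'. mixed n p' \<and> mixed n q' \<and>
              real (card (supp n p')) \<le> k \<and> real (card (supp n q')) \<le> k \<and>
              pdist n (p, q) (p', q') \<le> 8 * \<Delta>)) \<and>
        (\<forall>R' C'. perturb n (\<epsilon> / 2) R C R' C' \<longrightarrow>
          (\<forall>p q. nash n R' C' p q \<longrightarrow>
           (\<exists>p' q'. mixed n p' \<and> mixed n q' \<and>
              real (card (supp n p')) \<le> k \<and> real (card (supp n q')) \<le> k \<and>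
              pdist n (p, q) (p', q') \<le> 9 * \<Delta>)))))"
proof (rule exI[of _ "1::real"], rule exI[of _ "16900::real"], intro conjI allI impI)
  fix n :: nat and R C :: "nat \<Rightarrow> nat \<Rightarrow> real" and \<epsilon> \<Delta> :: real
  assume h: "2 \<le> n \<and> 0 < \<epsilon> \<and> \<epsilon> \<le> \<Delta> \<and> \<Delta> \<le> 1 \<and>
      (\<forall>i<n. \<forall>j<n. R i j \<in> {0..1} \<and> C i j \<in> {0..1}) \<and>
      finite (nash_set n R C) \<and>
      real (card (nash_set n R C)) \<le> real n powr (1 * (\<Delta> / \<epsilon>)\<^sup>2) \<and>
      (ws_approx_stable n R C \<epsilon> \<Delta> \<or> perturb_stable n R C (\<epsilon> / 2) \<Delta>)"
  have n2: "2 \<le> n" and e0: "0 < \<epsilon>" and eD: "\<epsilon> \<le> \<Delta>" and D1: "\<Delta> \<le> 1"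
    and RC: "\<forall>i<n. \<forall>j<n. R i j \<in> {0..1} \<and> C i j \<in> {0..1}"
    and fin: "finite (nash_set n R C)"
    and cN: "real (card (nash_set n R C)) \<le> real n powr (1 * (\<Delta> / \<epsilon>)\<^sup>2)"
    and st: "ws_approx_stable n R C \<epsilon> \<Delta> \<or> perturb_stable n R C (\<epsilon> / 2) \<Delta>"
    using h by blast+
  have ws: "ws_approx_stable n R C \<epsilon> \<Delta>" using st perturb_stable_ws[OF _ e0] by blast
  note P1 = part1[OF n2 e0 eD D1 RC fin cN ws]
  define k where "k = 16900 * (\<Delta> / \<epsilon>)\<^sup>2 * ln (1 + 1 / \<Delta>) * ln (real n)"
  have A1: "\<forall>p q. nash n R C p q \<longrightarrow>
           (\<exists>p' q'. mixed n p' \<and> mixed n q' \<and>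
              real (card (supp n p')) \<le> k \<and> real (card (supp n q')) \<le> k \<and>
              pdist n (p, q) (p', q') \<le> 8 * \<Delta>)"
    using P1 unfolding k_def by blast
  have A2: "\<forall>R' C'. perturb n (\<epsilon> / 2) R C R' C' \<longrightarrow>
          (\<forall>p q. nash n R' C' p q \<longrightarrow>
           (\<exists>p' q'. mixed n p' \<and> mixed n q' \<and>
              real (card (supp n p')) \<le> k \<and> real (card (supp n q')) \<le> k \<and>
              pdist n (p, q) (p', q') \<le> 9 * \<Delta>))"
  proof (intro allI impI)
    fix R' C' p q assume pt: "perturb n (\<epsilon> / 2) R C R' C'" and ne: "nash n R' C' p q"
    have "ws_eq n R C \<epsilon> p q" by (rule nash_perturb_ws[OF pt ne])
    then obtain pq0 where pq0: "pq0 \<in> nash_set n R C" "pdist n (p, q) pq0 \<le> \<Delta>"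
      using ws unfolding ws_approx_stable_def by blast
    have "nash n R C (fst pq0) (snd pq0)" using pq0(1) unfolding nash_set_def by auto
    then obtain p' q' where pq': "mixed n p'" "mixed n q'" "real (card (supp n p')) \<le> k"
      "real (card (supp n q')) \<le> k" "pdist n (fst pq0, snd pq0) (p', q') \<le> 8 * \<Delta>"
      using A1 by blast
    have "pdist n (p, q) (p', q') \<le> pdist n (p, q) pq0 + pdist n pq0 (p', q')" by (rule pdist_triangle)
    also have "\<dots> \<le> 9 * \<Delta>" using pq0(2) pq'(5) by simp
    finally show "\<exists>p' q'. mixed n p' \<and> mixed n q' \<and>
              real (card (supp n p')) \<le> k \<and> real (card (supp n q')) \<le> k \<and>
              pdist n (p, q) (p', q') \<le> 9 * \<Delta>" using pq' by blast
  qed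
  show "let k = 16900 * (\<Delta> / \<epsilon>)\<^sup>2 * ln (1 + 1 / \<Delta>) * ln (real n) in
        (\<forall>p q. nash n R C p q \<longrightarrow>
           (\<exists>p' q'. mixed n p' \<and> mixed n q' \<and>
              real (card (supp n p')) \<le> k \<and> real (card (supp n q')) \<le> k \<and>
              pdist n (p, q) (p', q') \<le> 8 * \<Delta>)) \<and>
        (\<forall>R' C'. perturb n (\<epsilon> / 2) R C R' C' \<longrightarrow>
          (\<forall>p q. nash n R' C' p q \<longrightarrow>
           (\<exists>p' q'. mixed n p' \<and> mixed n q' \<and>
              real (card (supp n p')) \<le> k \<and> real (card (supp n q')) \<le> k \<and>
              pdist n (p, q) (p', q') \<le> 9 * \<Delta>)))"
    unfolding Let_def k_def[symmetric] using A1 A2 by blast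
qed simp_all


end
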